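(* Let $q\ge1$, $k\ge2$ be integers and $\mathcal{A}$ as in the context. For the type-$\mathcal{A}$ random walk on $\mathbb{Z}^k$ let $\overline{S}_{n,k}=\frac1n(X_1+\cdots+X_n)$. Then for every $\varepsilon>0$, $$\mathbb{V}(\overline{S}_{n,k})=O_{\mathcal{A},k,q,\varepsilon}(n^{-1/2+\varepsilon})\quad\text{as } n\to\infty,$$ where $\mathbb{V}$ denotes variance.
   Context: $\mathcal{A}=\{\boldsymbol{\alpha}_1,\dots,\boldsymbol{\alpha}_q\}$ is a finite set of vectors $\boldsymbol{\alpha}_t=(\alpha_{t,1},\dots,\alpha_{t,k})$ with $0<\alpha_{t,j}<1$ for all $j$ and $\alpha_{t,1}+\cdots+\alpha_{t,k}=1$. For $\boldsymbol{\alpha}=(\alpha_1,\dots,\alpha_k)$ of this form, a type-$\boldsymbol{\alpha}$ step $\mathbf{w}(\boldsymbol{\alpha})$ is a random vector equal to the $j$-th standard basis vector of $\mathbb{Z}^k$ with probability $\alpha_j$. The type-$\mathcal{A}$ random walk is $\mathbf{p}_0=(0,\dots,0)$, $\mathbf{p}_i=\mathbf{p}_{i-1}+\mathbf{w}(\boldsymbol{\alpha}'_i)$ for $i\ge1$, where at each step a type $\boldsymbol{\alpha}'_i\in\mathcal{A}$ is chosen and the steps are independent. A lattice point $\mathbf{n}=(n_1,\dots,n_k)\in\mathbb{Z}^k$ is visible if there is no other lattice point on the segment joining it to the origin (equivalently $\gcd(n_1,\dots,n_k)=1$). $X_i=1$ if $\mathbf{p}_i$ is visible and $X_i=0$ otherwise.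 *)

theory Defs
  imports "HOL-Probability.Probability"
begin

text \<open>A single type-alpha step is the index j (0-based, j < k) of the standard basis
  vector e_j that is added, chosen with probability alpha_j.\<close>

definition step_pmf :: "real list \<Rightarrow> nat pmf" where
  "step_pmf \<alpha> = embed_pmf (\<lambda>j. if j < length \<alpha> then \<alpha> ! j else 0)"

text \<open>Joint law of the first n steps of the walk, given the (deterministic) choice
  sequence ch, where ch i is the type used at step i (i \<ge> 1).\<close>

fun steps_pmf :: "(nat \<Rightarrow> real list) \<Rightarrow> nat \<Rightarrow> nat list pmf" where
  "steps_pmf ch 0 = return_pmf []"
| "steps_pmf ch (Suc n) =
     bind_pmf (steps_pmf ch n) (\<lambda>ws. map_pmf (\<lambda>w. ws @ [w]) (step_pmf (ch (Suc n))))"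

text \<open>Position p_i in Z^k after i steps: coordinate j counts the steps equal to e_j.\<close>

definition walk_pos :: "nat \<Rightarrow> nat list \<Rightarrow> nat \<Rightarrow> int list" where
  "walk_pos k ws i = map (\<lambda>j. int (count_list (take i ws) j)) [0..<k]"

definition visible :: "int list \<Rightarrow> bool" where
  "visible v \<longleftrightarrow> Gcd (set v) = 1"

definition X_ind :: "nat \<Rightarrow> nat list \<Rightarrow> nat \<Rightarrow> real" where
  "X_ind k ws i = (if visible (walk_pos k ws i) then 1 else 0)"

definition S_bar :: "nat \<Rightarrow> nat \<Rightarrow> nat list \<Rightarrow> real" where
  "S_bar k n ws = (1 / real n) * (\<Sum>i=1..n. X_ind k ws i)"

definition valid_type :: "nat \<Rightarrow> real list \<Rightarrow> bool" where
  "valid_type k \<alpha> \<longleftrightarrow> length \<alpha> = k \<and> (\<forall>j<k. 0 < \<alpha> ! j \<and> \<alpha> ! j < 1) \<and> sum_list \<alpha> = 1"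

end

theory Submission
  imports Defs "HOL-Computational_Algebra.Primes"
begin

lemma exp_bind_pmf:
  fixes f :: "'b \<Rightarrow> real"
  assumes "\<And>x. \<bar>f x\<bar> \<le> B"
  shows "measure_pmf.expectation (bind_pmf M N) f = measure_pmf.expectation M (\<lambda>x. measure_pmf.expectation (N x) f)"
proof -
  have "measure_pmf (bind_pmf M N) = measure_pmf M \<bind> (\<lambda>x. measure_pmf (N x))"
    by (rule measure_pmf_bind)
  moreover have "integral\<^sup>L (measure_pmf M \<bind> (\<lambda>x. measure_pmf (N x))) f = \<integral>x. integral\<^sup>L (measure_pmf (N x)) f \<partial>measure_pmf M"
    apply (rule integral_bind[where K="count_space UNIV" and B=B and B'=1])
    using assms by (auto simp: measure_pmf.emeasure_space_1 measure_pmf_in_subprob_algebra intro: measure_pmf.finite_measure)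
  ultimately show ?thesis by simp
qed

lemma exp_cong_pmf:
  fixes f g :: "'b \<Rightarrow> real"
  assumes "\<And>x. x \<in> set_pmf M \<Longrightarrow> f x = g x"
  shows "measure_pmf.expectation M f = measure_pmf.expectation M g"
  by (rule integral_cong_AE) (auto intro!: AE_pmfI assms)

lemma exp_map_pmf:
  fixes f :: "'b \<Rightarrow> real"
  shows "measure_pmf.expectation (map_pmf g M) f = measure_pmf.expectation M (\<lambda>x. f (g x))"
  by simp

lemma exp_abs_le:
  fixes f :: "'b \<Rightarrow> real"
  assumes "\<And>x. x \<in> set_pmf M \<Longrightarrow> \<bar>f x\<bar> \<le> B"
  shows "\<bar>measure_pmf.expectation M f\<bar> \<le> B"
proof -
  have "\<bar>measure_pmf.expectation M f\<bar> \<le> measure_pmf.expectation M (\<lambda>x. \<bar>f x\<bar>)"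
    by (rule integral_abs_bound)
  also have "\<dots> \<le> measure_pmf.expectation M (\<lambda>x. B)"
    apply (rule integral_mono_AE)
      apply (rule measure_pmf.integrable_const_bound[where B=B])
    using assms by (auto intro!: AE_pmfI)
  finally show ?thesis by simp
qed

lemma exp_mono_pmf:
  fixes f g :: "'b \<Rightarrow> real"
  assumes "\<And>x. x \<in> set_pmf M \<Longrightarrow> f x \<le> g x"
    and "\<And>x. \<bar>f x\<bar> \<le> B" and "\<And>x. \<bar>g x\<bar> \<le> B"
  shows "measure_pmf.expectation M f \<le> measure_pmf.expectation M g"
  apply (rule integral_mono_AE)
  apply (rule measure_pmf.integrable_const_bound[where B=B]) using assms apply (auto intro!: AE_pmfI)[2]
  apply (rule measure_pmf.integrable_const_bound[where B=B]) using assms apply (auto intro!: AE_pmfI)[2]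
  using assms by (auto intro!: AE_pmfI)

lemma valid_typeD:
  assumes "valid_type k \<alpha>"
  shows "length \<alpha> = k" "\<And>j. j < k \<Longrightarrow> 0 < \<alpha> ! j" "\<And>j. j < k \<Longrightarrow> \<alpha> ! j < 1" "sum_list \<alpha> = 1"
  using assms unfolding valid_type_def by auto

lemma pmf_step:
  assumes "valid_type k \<alpha>"
  shows "pmf (step_pmf \<alpha>) j = (if j < k then \<alpha> ! j else 0)"
proof -
  let ?f = "\<lambda>j. if j < length \<alpha> then \<alpha> ! j else 0"
  have len: "length \<alpha> = k" using valid_typeD[OF assms] by simp
  have nn: "\<And>j. 0 \<le> ?f j" using valid_typeD[OF assms] by (auto simp: less_imp_le)
  have "(\<integral>\<^sup>+x. ennreal (?f x) \<partial>count_space UNIV) = (\<Sum>x\<in>{..<k}. ennreal (?f x))"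
    by (rule nn_integral_count_space') (auto simp: len)
  also have "\<dots> = ennreal (\<Sum>x<k. ?f x)"
    by (rule sum_ennreal) (use nn in auto)
  also have "(\<Sum>x<k. ?f x) = (\<Sum>x<k. \<alpha> ! x)" using len by simp
  also have "\<dots> = sum_list \<alpha>" using len by (simp add: sum_list_sum_nth atLeast0LessThan)
  also have "\<dots> = 1" using valid_typeD[OF assms] by simp
  finally have "(\<integral>\<^sup>+x. ennreal (?f x) \<partial>count_space UNIV) = 1" by simp
  then show ?thesis unfolding step_pmf_def
    by (subst pmf_embed_pmf) (use nn len in auto)
qed

lemma set_step:
  assumes "valid_type k \<alpha>"
  shows "set_pmf (step_pmf \<alpha>) = {..<k}"
  using pmf_step[OF assms] valid_typeD[OF assms] by (force simp: set_pmf_eq)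

lemma steps_split:
  "steps_pmf ch (i + m) = bind_pmf (steps_pmf ch i) (\<lambda>ws. map_pmf (\<lambda>vs. ws @ vs) (steps_pmf (\<lambda>t. ch (i + t)) m))"
proof (induction m)
  case 0
  then show ?case by (simp add: map_pmf_def bind_return_pmf bind_return_pmf')
next
  case (Suc m)
  have "steps_pmf ch (i + Suc m) = bind_pmf (steps_pmf ch (i + m)) (\<lambda>ws. map_pmf (\<lambda>w. ws @ [w]) (step_pmf (ch (Suc (i + m)))))"
    by simp
  also have "\<dots> = bind_pmf (steps_pmf ch i) (\<lambda>ws. map_pmf (\<lambda>vs. ws @ vs) (steps_pmf (\<lambda>t. ch (i + t)) (Suc m)))"
    unfolding Suc by (simp add: map_pmf_def bind_assoc_pmf bind_return_pmf)
  finally show ?case .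
qed

lemma set_steps:
  assumes "\<forall>t\<ge>1. valid_type k (ch t)"
  shows "ws \<in> set_pmf (steps_pmf ch n) \<Longrightarrow> length ws = n \<and> set ws \<subseteq> {..<k}"
proof (induction n arbitrary: ws)
  case 0
  then show ?case by simp
next
  case (Suc n)
  then show ?case using set_step assms by fastforce
qed

lemma exp_steps_take:
  fixes f :: "nat list \<Rightarrow> real"
  assumes "M \<le> N" and "\<And>x. \<bar>f x\<bar> \<le> B"
  shows "measure_pmf.expectation (steps_pmf ch N) (\<lambda>ws. f (take M ws)) = measure_pmf.expectation (steps_pmf ch M) f"
proof -
  obtain m where N: "N = M + m" using assms le_Suc_ex by blast
  have "measure_pmf.expectation (steps_pmf ch N) (\<lambda>ws. f (take M ws)) =
     measure_pmf.expectation (steps_pmf ch M) (\<lambda>ws. measure_pmf.expectation (map_pmf (\<lambda>vs. ws @ vs) (steps_pmf (\<lambda>t. ch (M + t)) m)) (\<lambda>ws. f (take M ws)))"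
    unfolding N steps_split by (rule exp_bind_pmf) (rule assms)
  also have "\<dots> = measure_pmf.expectation (steps_pmf ch M) f"
  proof (rule exp_cong_pmf)
    fix ws assume "ws \<in> set_pmf (steps_pmf ch M)"
    then have "length ws = M" by (induction M arbitrary: ws) auto
    then show "measure_pmf.expectation (map_pmf (\<lambda>vs. ws @ vs) (steps_pmf (\<lambda>t. ch (M + t)) m)) (\<lambda>ws. f (take M ws)) = f ws"
      by simp
  qed
  finally show ?thesis .
qed

lemma central_even: "((2*n) choose n)^2 * (2*n+1) \<le> (16::nat)^n"
proof (induction n)
  case 0 show ?case by simp
next
  case (Suc n)
  define C where "C = (2*n) choose n"
  define C' where "C' = (2*Suc n) choose Suc n"
  have a: "Suc n * (Suc (Suc (2*n)) choose Suc n) = Suc (Suc (2*n)) * (Suc (2*n) choose n)"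
    by (rule Suc_times_binomial)
  have b: "Suc n * (Suc (2*n) choose Suc n) = Suc (2*n) * ((2*n) choose n)"
    by (rule Suc_times_binomial)
  have c: "(Suc (2*n) choose Suc n) = (Suc (2*n) choose n)"
    using binomial_symmetric[of n "Suc (2*n)"] by simp
  define X where "X = Suc (2*n) choose n"
  have e1: "2*Suc n = Suc (Suc (2*n))" by simp
  have a': "(n+1) * C' = (2*n+2) * X"
    using a unfolding C'_def X_def e1 by simp
  have b': "(n+1) * X = (2*n+1) * C"
    using b c unfolding C_def X_def by simp
  have "(n+1) * ((n+1) * C') = (2*n+2) * ((n+1) * X)" using a' by simp
  also have "\<dots> = (n+1) * (2 * (2*n+1) * C)" using b' by simp
  finally have id0: "(n+1) * ((n+1) * C') = (n+1) * (2 * (2*n+1) * C)" .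
  have id: "(n+1) * C' = 2 * (2*n+1) * C" using id0 by (simp only: mult_left_cancel[of "n+1"])
  have ineq: "(2*n+1)*(2*n+3) \<le> 4*(n+1)^2" by (simp add: power2_eq_square algebra_simps)
  have "(n+1)^2 * (C'^2 * (2*n+3)) = ((n+1) * C')^2 * (2*n+3)" by (simp only: power_mult_distrib mult.assoc)
  also have "\<dots> = 4 * (2*n+1) * ((2*n+1)*(2*n+3)) * C^2" unfolding id by (simp add: power_mult_distrib power2_eq_square algebra_simps)
  also have "\<dots> \<le> 4 * (2*n+1) * (4*(n+1)^2) * C^2" using ineq by (intro mult_right_mono mult_left_mono) auto
  also have "\<dots> = 16 * (n+1)^2 * (C^2 * (2*n+1))" by (simp add: algebra_simps)
  also have "\<dots> \<le> 16 * (n+1)^2 * 16^n" using Suc.IH unfolding C_def by (intro mult_left_mono) auto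
  also have "\<dots> = (n+1)^2 * 16^(Suc n)" by simp
  finally have "(n+1)^2 * (C'^2 * (2*n+3)) \<le> (n+1)^2 * 16^(Suc n)" .
  then have "C'^2 * (2*n+3) \<le> 16^(Suc n)" by (simp del: power_Suc)
  then show ?case unfolding C'_def by (simp add: algebra_simps)
qed

lemma central_bound: "(N choose (N div 2))^2 * (N+1) \<le> (4::nat)^N"
proof (cases "even N")
  case True
  then obtain n where N: "N = 2*n" by (auto elim: evenE)
  have "(4::nat)^N = 16^n" by (simp add: N power_mult)
  then show ?thesis using central_even[of n] by (simp add: N)
next
  case False
  then obtain n where N: "N = 2*n+1" by (auto elim: oddE)
  have d: "N div 2 = n" using N by simp
  have p: "(Suc (Suc (2*n)) choose Suc n) = (Suc (2*n) choose n) + (Suc (2*n) choose Suc n)" by simp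
  have c: "(Suc (2*n) choose Suc n) = (Suc (2*n) choose n)"
    using binomial_symmetric[of n "Suc (2*n)"] by simp
  have e: "((2*Suc n) choose Suc n) = 2 * (N choose n)" using p c N by simp
  have "4 * ((N choose n)^2 * (N+1)) \<le> (2 * (N choose n))^2 * (2 * Suc n + 1)"
    by (simp add: N power_mult_distrib algebra_simps)
  also have "\<dots> \<le> 16^Suc n" using central_even[of "Suc n"] e by simp
  also have "\<dots> = 4 * 4^N" by (simp add: N power_mult power_add)
  finally show ?thesis using d by simp
qed

definition qb :: "nat \<Rightarrow> nat \<Rightarrow> real" where "qb N l = real (N choose l) / 2^N"

lemma qb_central: "qb N (N div 2) \<le> 1 / sqrt (real N + 1)"
proof -
  have "real ((N choose (N div 2))^2 * (N+1)) \<le> real (4^N)" using central_bound[of N] by linarith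
  moreover have "(4::real)^N = (2^N)^2" by (simp add: power2_eq_square flip: power_mult_distrib)
  ultimately have h: "(real (N choose (N div 2)))^2 * (real N + 1) \<le> (2^N)^2" by (simp add: algebra_simps)
  have pos: "0 < sqrt (real N + 1)" by simp
  have "(real (N choose (N div 2)) * sqrt (real N + 1))^2 \<le> (2^N)^2"
    using h by (simp add: power_mult_distrib)
  then have "real (N choose (N div 2)) * sqrt (real N + 1) \<le> 2^N"
    by (rule power2_le_imp_le) simp
  then show ?thesis unfolding qb_def using pos by (simp add: field_simps)
qed

lemma qb_mono: "i < N div 2 \<Longrightarrow> qb N i \<le> qb N (Suc i)"
  unfolding qb_def by (intro divide_right_mono) (auto intro!: binomial_mono)

lemma qb_antimono: "N div 2 \<le> i \<Longrightarrow> qb N (Suc i) \<le> qb N i"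
proof (cases "i < N")
  case True
  assume "N div 2 \<le> i"
  then show ?thesis using True unfolding qb_def by (intro divide_right_mono) (auto intro!: binomial_antimono)
next
  case False
  then have z: "N choose Suc i = 0" by simp
  show ?thesis unfolding qb_def z by simp
qed

lemma qb_nonneg: "0 \<le> qb N i" unfolding qb_def by simp

lemma qb_TV: "qb N 0 + (\<Sum>i\<le>N. \<bar>qb N (Suc i) - qb N i\<bar>) \<le> 2 / sqrt (real N + 1)"
proof -
  define h where "h = N div 2"
  have hN: "h \<le> N" unfolding h_def by simp
  have split: "{..N} = {..<h} \<union> {h..N}" using hN by auto
  have "(\<Sum>i\<le>N. \<bar>qb N (Suc i) - qb N i\<bar>) = (\<Sum>i<h. \<bar>qb N (Suc i) - qb N i\<bar>) + (\<Sum>i=h..N. \<bar>qb N (Suc i) - qb N i\<bar>)"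
    unfolding split by (rule sum.union_disjoint) auto
  also have "(\<Sum>i<h. \<bar>qb N (Suc i) - qb N i\<bar>) = (\<Sum>i<h. qb N (Suc i) - qb N i)"
    using qb_mono unfolding h_def by (intro sum.cong) auto
  also have "\<dots> = qb N h - qb N 0" by (rule sum_lessThan_telescope)
  also have "(\<Sum>i=h..N. \<bar>qb N (Suc i) - qb N i\<bar>) = - (\<Sum>i=h..N. qb N (Suc i) - qb N i)"
    using qb_antimono unfolding h_def by (simp add: sum_negf[symmetric])
  also have "(\<Sum>i=h..N. qb N (Suc i) - qb N i) = qb N (Suc N) - qb N h"
    using hN by (intro sum_Suc_diff) simp
  also have "qb N (Suc N) = 0" unfolding qb_def by simp
  finally have "qb N 0 + (\<Sum>i\<le>N. \<bar>qb N (Suc i) - qb N i\<bar>) = 2 * qb N h" by simp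
  also have "\<dots> \<le> 2 / sqrt (real N + 1)" using qb_central[of N] unfolding h_def by simp
  finally show ?thesis .
qed

definition Pz :: "nat \<Rightarrow> int \<Rightarrow> real" where "Pz N x = (if x < 0 then 0 else qb N (nat x))"

lemma Pz_telescope: "Pz N u - Pz N (u - int t) = (\<Sum>i<t. Pz N (u - int i) - Pz N (u - int i - 1))"
  by (induction t) (simp_all add: algebra_simps)

lemma qb_zero: "l > N \<Longrightarrow> qb N l = 0" unfolding qb_def by simp

lemma Pz_TV: "(\<Sum>w\<in>{0..int N + 1}. \<bar>Pz N w - Pz N (w - 1)\<bar>) = qb N 0 + (\<Sum>i\<le>N. \<bar>qb N (Suc i) - qb N i\<bar>)"
proof -
  have e: "{0..int N + 1} = insert 0 ((\<lambda>i. int i + 1) ` {..N})"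
  proof (intro equalityI subsetI)
    fix x assume x: "x \<in> {0..int N + 1}"
    show "x \<in> insert 0 ((\<lambda>i. int i + 1) ` {..N})"
    proof (cases "x = 0")
      case False
      then have "x = int (nat (x - 1)) + 1 \<and> nat (x - 1) \<in> {..N}" using x by auto
      then show ?thesis by blast
    qed simp
  qed auto
  have "(\<Sum>w\<in>{0..int N + 1}. \<bar>Pz N w - Pz N (w - 1)\<bar>) = \<bar>Pz N 0 - Pz N (0 - 1)\<bar> + (\<Sum>w\<in>(\<lambda>i. int i + 1) ` {..N}. \<bar>Pz N w - Pz N (w - 1)\<bar>)"
    unfolding e by (subst sum.insert) auto
  also have "(\<Sum>w\<in>(\<lambda>i. int i + 1) ` {..N}. \<bar>Pz N w - Pz N (w - 1)\<bar>) = (\<Sum>i\<le>N. \<bar>Pz N (int i + 1) - Pz N (int i + 1 - 1)\<bar>)"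
    by (subst sum.reindex) (auto simp: inj_on_def)
  also have "\<dots> = (\<Sum>i\<le>N. \<bar>qb N (Suc i) - qb N i\<bar>)"
    by (intro sum.cong) (auto simp: Pz_def nat_add_distrib)
  finally show ?thesis by (simp add: Pz_def qb_nonneg)
qed

lemma shift_bound:
  fixes d t :: nat and r :: int
  assumes "t < d"
  shows "\<bar>(\<Sum>l\<le>N. qb N l * (if int d dvd int l + r then 1 else 0)) - (\<Sum>l\<le>N. qb N l * (if int d dvd int l + (r + int t) then 1 else 0))\<bar>
     \<le> 2 / sqrt (real N + 1)"
proof -
  define ind where "ind u = (if int d dvd int u + r then 1 else (0::real))" for u :: nat
  define g where "g w = \<bar>Pz N w - Pz N (w - 1)\<bar>" for w
  have g_nn: "0 \<le> g w" for w unfolding g_def by simp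
  have g_out: "g w = 0" if "w \<notin> {0..int N + 1}" for w
    using that unfolding g_def Pz_def by (auto simp: qb_zero)
  have A: "(\<Sum>l\<le>N. qb N l * (if int d dvd int l + r then 1 else 0)) = (\<Sum>u\<le>N+t. Pz N (int u) * ind u)"
    by (rule sum.mono_neutral_cong_left) (auto simp: ind_def Pz_def qb_zero)
  have B: "(\<Sum>l\<le>N. qb N l * (if int d dvd int l + (r + int t) then 1 else 0)) = (\<Sum>u\<le>N+t. Pz N (int u - int t) * ind u)"
  proof -
    have "(\<Sum>l\<le>N. qb N l * (if int d dvd int l + (r + int t) then 1 else 0)) = (\<Sum>l\<le>N. Pz N (int (l + t) - int t) * ind (l + t))"
      by (intro sum.cong) (auto simp: ind_def Pz_def algebra_simps)
    also have "\<dots> = (\<Sum>u\<in>(\<lambda>l. l + t) ` {..N}. Pz N (int u - int t) * ind u)"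
      by (subst sum.reindex) (auto simp: inj_on_def)
    also have "\<dots> = (\<Sum>u\<le>N+t. Pz N (int u - int t) * ind u)"
    proof (rule sum.mono_neutral_left)
      show "\<forall>u\<in>{..N + t} - (\<lambda>l. l + t) ` {..N}. Pz N (int u - int t) * ind u = 0"
      proof
        fix u assume u: "u \<in> {..N + t} - (\<lambda>l. l + t) ` {..N}"
        show "Pz N (int u - int t) * ind u = 0"
        proof (cases "u < t")
          case True then show ?thesis by (simp add: Pz_def)
        next
          case False
          then have "u = (u - t) + t \<and> u - t \<in> {..N}" using u by auto
          then have "u \<in> (\<lambda>l. l + t) ` {..N}" by blast
          then show ?thesis using u by simp
        qed
      qed
    qed auto
    finally show ?thesis .
  qed
  define S where "S = Set.filter (\<lambda>(u, i). int d dvd int u + r) ({..N+t} \<times> {..<t})"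
  have finS: "finite S" unfolding S_def by simp
  have "\<bar>(\<Sum>u\<le>N+t. Pz N (int u) * ind u) - (\<Sum>u\<le>N+t. Pz N (int u - int t) * ind u)\<bar>
      = \<bar>\<Sum>u\<le>N+t. (Pz N (int u) - Pz N (int u - int t)) * ind u\<bar>"
    by (simp add: sum_subtractf left_diff_distrib)
  also have "\<dots> \<le> (\<Sum>u\<le>N+t. \<bar>(Pz N (int u) - Pz N (int u - int t)) * ind u\<bar>)"
    by (rule sum_abs)
  also have "\<dots> \<le> (\<Sum>u\<le>N+t. (\<Sum>i<t. g (int u - int i)) * ind u)"
  proof (rule sum_mono)
    fix u
    have "\<bar>Pz N (int u) - Pz N (int u - int t)\<bar> \<le> (\<Sum>i<t. g (int u - int i))"
      unfolding Pz_telescope g_def by (rule order_trans[OF sum_abs]) (simp add: algebra_simps)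
    then show "\<bar>(Pz N (int u) - Pz N (int u - int t)) * ind u\<bar> \<le> (\<Sum>i<t. g (int u - int i)) * ind u"
      by (auto simp: ind_def abs_mult)
  qed
  also have "\<dots> = (\<Sum>(u,i)\<in>{..N+t} \<times> {..<t}. g (int u - int i) * ind u)"
    by (simp add: sum_distrib_right sum.cartesian_product)
  also have "\<dots> = (\<Sum>(u,i)\<in>S. g (int u - int i))"
    unfolding S_def by (rule sum.mono_neutral_cong_right) (auto simp: ind_def split: if_splits)
  also have "\<dots> = (\<Sum>w\<in>(\<lambda>(u,i). int u - int i) ` S. g w)"
  proof (subst sum.reindex)
    show "inj_on (\<lambda>(u, i). int u - int i) S"
    proof (rule inj_onI, clarify)
      fix u i u' i' assume "(u, i) \<in> S" "(u', i') \<in> S" and eq: "int u - int i = int u' - int i'"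
      then have du: "int d dvd int u + r" "int d dvd int u' + r" and it: "i < t" "i' < t" unfolding S_def by auto
      have "int d dvd (int u + r) - (int u' + r)" using du by (rule dvd_diff)
      then have dv: "int d dvd int u - int u'" by simp
      have "\<bar>int u - int u'\<bar> < int d" using eq it assms by linarith
      then have "int u - int u' = 0" using dv dvd_imp_le_int[of "int u - int u'" "int d"] by force
      then show "u = u' \<and> i = i'" using eq by simp
    qed
  qed (simp add: case_prod_beta)
  also have "\<dots> \<le> (\<Sum>w\<in>(\<lambda>(u,i). int u - int i) ` S \<union> {0..int N + 1}. g w)"
    by (rule sum_mono2) (auto simp: finS g_nn)
  also have "\<dots> = (\<Sum>w\<in>{0..int N + 1}. g w)"
    by (rule sum.mono_neutral_right) (auto simp: finS g_out)
  also have "\<dots> \<le> 2 / sqrt (real N + 1)" unfolding g_def Pz_TV by (rule qb_TV)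
  finally show ?thesis unfolding A B .
qed

lemma exp_bin_half: "measure_pmf.expectation (binomial_pmf N (1/2)) f = (\<Sum>l\<le>N. qb N l * f l)"
proof -
  have "measure_pmf.expectation (binomial_pmf N (1/2)) f = (\<Sum>l\<le>N. (real (N choose l) * (1/2) ^ l * (1 - 1/2) ^ (N - l)) *\<^sub>R f l)"
    by (rule expectation_binomial_pmf') simp
  also have "\<dots> = (\<Sum>l\<le>N. qb N l * f l)"
  proof (intro sum.cong refl)
    fix l assume "l \<in> {..N}"
    then have "(1/2::real) ^ l * (1/2) ^ (N - l) = (1/2)^N" by (simp flip: power_add)
    then show "(real (N choose l) * (1/2) ^ l * (1 - 1/2) ^ (N - l)) *\<^sub>R f l = qb N l * f l"
      unfolding qb_def by (simp add: power_divide field_simps)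
  qed
  finally show ?thesis .
qed

lemma bin1d:
  fixes d :: nat and r s :: int
  assumes "d > 0"
  shows "\<bar>measure_pmf.expectation (binomial_pmf N (1/2)) (\<lambda>l. if int d dvd int l + r then 1 else 0)
        - measure_pmf.expectation (binomial_pmf N (1/2)) (\<lambda>l. if int d dvd int l + s then 1 else 0)\<bar> \<le> 2 / sqrt (real N + 1)"
proof -
  define t where "t = nat ((s - r) mod int d)"
  have t: "t < d" using assms unfolding t_def by (simp add: nat_less_iff)
  have "int t = (s - r) mod int d" using assms unfolding t_def by simp
  then have "int d dvd (s - r) - int t" by (simp add: minus_mod_eq_mult_div[symmetric])
  then have eq: "(int d dvd int l + s) \<longleftrightarrow> (int d dvd int l + (r + int t))" for l
  proof -
    assume h: "int d dvd (s - r) - int t"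
    have "int l + s = (int l + (r + int t)) + ((s - r) - int t)" by simp
    then show ?thesis using dvd_add_left_iff[OF h, of "int l + (r + int t)"] by simp
  qed
  show ?thesis unfolding exp_bin_half eq using shift_bound[OF t] by simp
qed

lemma exp_binom_inv:
  assumes p: "0 < p" "p \<le> 1"
  shows "measure_pmf.expectation (binomial_pmf m p) (\<lambda>N. 1 / (real N + 1)) \<le> 1 / ((real m + 1) * p)"
proof -
  have "measure_pmf.expectation (binomial_pmf m p) (\<lambda>N. 1 / (real N + 1)) =
      (\<Sum>l\<le>m. (real (m choose l) * p ^ l * (1 - p) ^ (m - l)) *\<^sub>R (1 / (real l + 1)))"
    by (rule expectation_binomial_pmf') (use p in simp)
  also have "\<dots> = (\<Sum>l\<le>m. real (Suc m choose Suc l) * p ^ Suc l * (1 - p) ^ (Suc m - Suc l)) / ((real m + 1) * p)"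
    unfolding sum_divide_distrib
  proof (intro sum.cong refl)
    fix l
    have "real (Suc l) * real (Suc m choose Suc l) = real (Suc m) * real (m choose l)"
      using Suc_times_binomial[of l m] by (metis of_nat_mult)
    then have e: "real (Suc m choose Suc l) = real (Suc m) * real (m choose l) / real (Suc l)"
      by (simp add: field_simps)
    show "(real (m choose l) * p ^ l * (1 - p) ^ (m - l)) *\<^sub>R (1 / (real l + 1)) =
        real (Suc m choose Suc l) * p ^ Suc l * (1 - p) ^ (Suc m - Suc l) / ((real m + 1) * p)"
    proof -
      define X where "X = real (m choose l) * p ^ l * (1 - p) ^ (m - l)"
      have "real (Suc m) * real (m choose l) / real (Suc l) * p ^ Suc l * (1 - p) ^ (Suc m - Suc l) / ((real m + 1) * p)
          = (((real m + 1) * p) * (X / (real l + 1))) / ((real m + 1) * p)"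
        unfolding X_def by (simp add: field_simps)
      also have "\<dots> = X / (real l + 1)" using p by (intro nonzero_mult_div_cancel_left) simp
      finally show ?thesis unfolding e X_def by simp
    qed
  qed
  also have "(\<Sum>l\<le>m. real (Suc m choose Suc l) * p ^ Suc l * (1 - p) ^ (Suc m - Suc l)) \<le>
      (\<Sum>l\<le>Suc m. real (Suc m choose l) * p ^ l * (1 - p) ^ (Suc m - l))"
  proof -
    have "(\<Sum>l\<le>m. real (Suc m choose Suc l) * p ^ Suc l * (1 - p) ^ (Suc m - Suc l)) =
        (\<Sum>l\<in>Suc ` {..m}. real (Suc m choose l) * p ^ l * (1 - p) ^ (Suc m - l))"
      by (subst sum.reindex) auto
    also have "\<dots> \<le> (\<Sum>l\<le>Suc m. real (Suc m choose l) * p ^ l * (1 - p) ^ (Suc m - l))"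
      by (rule sum_mono2) (use p in auto)
    finally show ?thesis .
  qed
  also have "(\<Sum>l\<le>Suc m. real (Suc m choose l) * p ^ l * (1 - p) ^ (Suc m - l)) = (p + (1 - p)) ^ Suc m"
    by (subst binomial_ring) simp
  finally show ?thesis using p by (simp add: divide_right_mono)
qed

lemma exp_binom_invsqrt:
  assumes p: "0 < p" "p \<le> 1"
  shows "measure_pmf.expectation (binomial_pmf m p) (\<lambda>N. 1 / sqrt (real N + 1)) \<le> 1 / sqrt ((real m + 1) * p)"
proof -
  define L where "L = sqrt ((real m + 1) * p)"
  have L: "L > 0" unfolding L_def using p by simp
  have pt: "1 / sqrt (real N + 1) \<le> (L * (1 / (real N + 1)) + 1 / L) / 2" for N
  proof -
    define x where "x = 1 / sqrt (real N + 1)"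
    have x2: "x^2 = 1 / (real N + 1)" unfolding x_def by (simp add: power_divide)
    have "0 \<le> (L * x - 1)^2 / L" using L by simp
    then have "0 \<le> L * x^2 - 2 * x + 1 / L" using L by (simp add: power2_diff field_simps power2_eq_square)
    then show ?thesis unfolding x2[symmetric] x_def[symmetric] by simp
  qed
  have "measure_pmf.expectation (binomial_pmf m p) (\<lambda>N. 1 / sqrt (real N + 1)) \<le>
      measure_pmf.expectation (binomial_pmf m p) (\<lambda>N. (L * (1 / (real N + 1)) + 1 / L) / 2)"
    by (rule integral_mono) (use p pt in auto)
  also have "\<dots> = (L * measure_pmf.expectation (binomial_pmf m p) (\<lambda>N. 1 / (real N + 1)) + 1 / L) / 2"
  proof -
    have "measure_pmf.expectation (binomial_pmf m p) (\<lambda>N. L * (1 / (real N + 1))) = L * measure_pmf.expectation (binomial_pmf m p) (\<lambda>N. 1 / (real N + 1))"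
      by (rule integral_mult_right_zero)
    then show ?thesis using p by simp
  qed
  also have "\<dots> \<le> (L * (1 / ((real m + 1) * p)) + 1 / L) / 2"
    using exp_binom_inv[OF p, of m] L by (intro divide_right_mono add_right_mono mult_left_mono) auto
  also have "\<dots> = 1 / L"
  proof -
    have L2: "(real m + 1) * p = L^2" unfolding L_def using p by simp
    show ?thesis unfolding L2 using L by (simp add: power2_eq_square field_simps)
  qed
  finally show ?thesis unfolding L_def .
qed

lemma pmf_embed_fin:
  fixes f :: "nat \<Rightarrow> real" and k :: nat
  assumes "\<And>j. 0 \<le> f j" "\<And>j. j \<ge> k \<Longrightarrow> f j = 0" "(\<Sum>j<k. f j) = 1"
  shows "pmf (embed_pmf f) j = f j"
proof -
  have "(\<integral>\<^sup>+x. ennreal (f x) \<partial>count_space UNIV) = (\<Sum>x\<in>{..<k}. ennreal (f x))"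
    by (rule nn_integral_count_space') (use assms in \<open>auto simp: not_less\<close>)
  also have "\<dots> = ennreal (\<Sum>x<k. f x)"
    by (rule sum_ennreal) (use assms in auto)
  finally have "(\<integral>\<^sup>+x. ennreal (f x) \<partial>count_space UNIV) = 1" using assms by simp
  then show ?thesis by (subst pmf_embed_pmf) (use assms in auto)
qed

definition rest_pmf :: "nat \<Rightarrow> nat \<Rightarrow> nat \<Rightarrow> real \<Rightarrow> real list \<Rightarrow> nat pmf" where
  "rest_pmf k a b h \<beta> = embed_pmf (\<lambda>j. if j < k then (\<beta> ! j - (if j = a then h else 0) - (if j = b then h else 0)) / (1 - 2*h) else 0)"

definition coin_pmf :: "nat \<Rightarrow> nat \<Rightarrow> nat pmf" where
  "coin_pmf a b = map_pmf (\<lambda>x. if x then a else b) (bernoulli_pmf (1/2))"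

lemma pmf_coin:
  assumes "a \<noteq> b"
  shows "pmf (coin_pmf a b) j = (if j = a then 1/2 else 0) + (if j = b then 1/2 else 0)"
proof -
  have inj: "inj (\<lambda>x. if x then a else b)" using assms by (auto simp: inj_def split: if_splits)
  consider "j = a" | "j = b" | "j \<noteq> a \<and> j \<noteq> b" by blast
  then show ?thesis
  proof cases
    case 1
    then show ?thesis using pmf_map_inj'[OF inj, of "bernoulli_pmf (1/2)" True] assms unfolding coin_pmf_def by simp
  next
    case 2
    then show ?thesis using pmf_map_inj'[OF inj, of "bernoulli_pmf (1/2)" False] assms unfolding coin_pmf_def by simp
  next
    case 3
    then have "j \<notin> set_pmf (coin_pmf a b)" unfolding coin_pmf_def by auto
    then show ?thesis using 3 by (simp add: set_pmf_eq)
  qed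
qed

definition cntv :: "nat list \<Rightarrow> nat \<Rightarrow> int" where "cntv ws c = int (count_list ws c)"

definition unitv :: "nat \<Rightarrow> nat \<Rightarrow> int" where "unitv w c = (if c = w then 1 else 0)"

definition addv :: "(nat \<Rightarrow> int) \<Rightarrow> (nat \<Rightarrow> int) \<Rightarrow> nat \<Rightarrow> int" where "addv x y c = x c + y c"

lemma cntv_snoc: "cntv (ws @ [w]) = addv (cntv ws) (unitv w)"
  by (auto simp: cntv_def addv_def unitv_def fun_eq_iff)

lemma cntv_Nil: "cntv [] = (\<lambda>_. 0)" by (simp add: cntv_def fun_eq_iff)

lemma map_pmf_const': "map_pmf (\<lambda>_. c) M = return_pmf c" by (simp add: map_pmf_const)

definition shiftv :: "nat \<Rightarrow> nat \<Rightarrow> int \<Rightarrow> (nat \<Rightarrow> int) \<Rightarrow> nat \<Rightarrow> int" where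
  "shiftv a b t z c = z c + (if c = a then t else 0) - (if c = b then t else 0)"

definition Fd :: "nat \<Rightarrow> (nat \<Rightarrow> real list) \<Rightarrow> nat \<Rightarrow> nat \<Rightarrow> (nat \<Rightarrow> int) \<Rightarrow> real" where
  "Fd k \<beta> m d x = measure_pmf.expectation (steps_pmf \<beta> m) (\<lambda>vs. if \<forall>c<k. int d dvd x c + cntv vs c then 1 else 0)"

lemma exp_diff_bound:
  fixes f g u :: "'b \<Rightarrow> real"
  assumes "\<And>x. \<bar>f x\<bar> \<le> B" "\<And>x. \<bar>g x\<bar> \<le> B" "\<And>x. \<bar>u x\<bar> \<le> B'"
    and "\<And>x. x \<in> set_pmf M \<Longrightarrow> \<bar>f x - g x\<bar> \<le> u x"
  shows "\<bar>measure_pmf.expectation M f - measure_pmf.expectation M g\<bar> \<le> measure_pmf.expectation M u"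
proof -
  have i1: "integrable M f" by (rule measure_pmf.integrable_const_bound[where B=B]) (use assms in auto)
  have i2: "integrable M g" by (rule measure_pmf.integrable_const_bound[where B=B]) (use assms in auto)
  have i3: "integrable M u" by (rule measure_pmf.integrable_const_bound[where B=B']) (use assms in auto)
  have "measure_pmf.expectation M f - measure_pmf.expectation M g = measure_pmf.expectation M (\<lambda>x. f x - g x)"
    using i1 i2 by simp
  also have "\<bar>\<dots>\<bar> \<le> measure_pmf.expectation M (\<lambda>x. \<bar>f x - g x\<bar>)" by (rule integral_abs_bound)
  also have "\<dots> \<le> measure_pmf.expectation M u"
    by (rule integral_mono_AE) (use i1 i2 i3 assms in \<open>auto intro!: AE_pmfI\<close>)
  finally show ?thesis .
qed

locale extr =
  fixes k a b :: nat and h :: real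
  assumes ab: "a \<noteq> b" "a < k" "b < k" and h: "0 < h" "2 * h < 1"
begin

definition good :: "real list \<Rightarrow> bool" where
  "good \<beta> \<longleftrightarrow> valid_type k \<beta> \<and> h \<le> \<beta> ! a \<and> h \<le> \<beta> ! b"

lemma pmf_rest:
  assumes "good \<beta>"
  shows "pmf (rest_pmf k a b h \<beta>) j = (if j < k then (\<beta> ! j - (if j = a then h else 0) - (if j = b then h else 0)) / (1 - 2*h) else 0)"
  unfolding rest_pmf_def
proof (rule pmf_embed_fin[where k=k])
  have v: "valid_type k \<beta>" and ha: "h \<le> \<beta> ! a" and hb: "h \<le> \<beta> ! b" using assms unfolding good_def by auto
  note vd = valid_typeD[OF v]
  show "0 \<le> (if j < k then (\<beta> ! j - (if j = a then h else 0) - (if j = b then h else 0)) / (1 - 2*h) else 0)" for j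
    using vd(2)[of j] ha hb h ab by (auto intro!: divide_nonneg_pos)
  show "(\<Sum>j<k. (if j < k then (\<beta> ! j - (if j = a then h else 0) - (if j = b then h else 0)) / (1 - 2*h) else 0)) = 1"
  proof -
    have "(\<Sum>j<k. (if j < k then (\<beta> ! j - (if j = a then h else 0) - (if j = b then h else 0)) / (1 - 2*h) else 0))
        = (\<Sum>j<k. \<beta> ! j - (if j = a then h else 0) - (if j = b then h else 0)) / (1 - 2*h)"
      by (simp add: sum_divide_distrib)
    also have "(\<Sum>j<k. \<beta> ! j - (if j = a then h else 0) - (if j = b then h else 0)) = (\<Sum>j<k. \<beta> ! j) - h - h"
      using ab by (simp add: sum_subtractf sum.delta)
    also have "(\<Sum>j<k. \<beta> ! j) = 1" using vd(1,4) by (simp add: sum_list_sum_nth atLeast0LessThan)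
    finally show ?thesis using h by simp
  qed
qed auto

lemma step_decomp:
  assumes "good \<beta>"
  shows "step_pmf \<beta> = bind_pmf (bernoulli_pmf (2*h)) (\<lambda>c. if c then coin_pmf a b else rest_pmf k a b h \<beta>)"
proof (rule pmf_eqI)
  fix j
  have v: "valid_type k \<beta>" using assms unfolding good_def by auto
  have "pmf (bind_pmf (bernoulli_pmf (2*h)) (\<lambda>c. if c then coin_pmf a b else rest_pmf k a b h \<beta>)) j
      = pmf (coin_pmf a b) j * (2*h) + pmf (rest_pmf k a b h \<beta>) j * (1 - 2*h)"
    unfolding pmf_bind using h by simp
  also have "\<dots> = pmf (step_pmf \<beta>) j"
    unfolding pmf_coin[OF ab(1)] pmf_rest[OF assms] pmf_step[OF v] using h ab by (auto simp: field_simps)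
  finally show "pmf (step_pmf \<beta>) j = pmf (bind_pmf (bernoulli_pmf (2*h)) (\<lambda>c. if c then coin_pmf a b else rest_pmf k a b h \<beta>)) j" ..
qed

definition Fv :: "nat \<Rightarrow> (nat \<Rightarrow> int) \<Rightarrow> nat \<Rightarrow> nat \<Rightarrow> int" where
  "Fv N R l c = R c + (if c = a then int l else 0) + (if c = b then int (N - l) else 0)"

primrec Qp :: "(nat \<Rightarrow> real list) \<Rightarrow> nat \<Rightarrow> (nat \<times> (nat \<Rightarrow> int)) pmf" where
  "Qp \<beta> 0 = return_pmf (0, \<lambda>_. 0)"
| "Qp \<beta> (Suc m) = bind_pmf (Qp \<beta> m) (\<lambda>(N,R). bind_pmf (bernoulli_pmf (2*h))
      (\<lambda>c. if c then return_pmf (Suc N, R) else map_pmf (\<lambda>w. (N, addv R (unitv w))) (rest_pmf k a b h (\<beta> (Suc m)))))"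

lemma Qp_fst: "map_pmf fst (Qp \<beta> m) = binomial_pmf m (2*h)"
proof (induction m)
  case 0
  then show ?case using h by (simp add: binomial_pmf_0)
next
  case (Suc m)
  have "map_pmf fst (Qp \<beta> (Suc m)) = bind_pmf (Qp \<beta> m) (\<lambda>(N,R). bind_pmf (bernoulli_pmf (2*h)) (\<lambda>c. return_pmf ((if c then 1 else 0) + N)))"
    by (auto simp: map_bind_pmf map_pmf_comp map_pmf_const' case_prod_beta intro!: bind_pmf_cong)
  also have "\<dots> = bind_pmf (map_pmf fst (Qp \<beta> m)) (\<lambda>N. bind_pmf (bernoulli_pmf (2*h)) (\<lambda>c. return_pmf ((if c then 1 else 0) + N)))"
    by (simp add: bind_map_pmf case_prod_beta case_prod_beta')
  also have "\<dots> = binomial_pmf (Suc m) (2*h)"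
    unfolding Suc using h by (subst binomial_pmf_Suc) (auto simp: bind_commute_pmf[of "binomial_pmf m (2*h)"] add.commute)
  finally show ?case .
qed

lemma inner_decomp:
  assumes "good \<beta>"
  shows "bind_pmf (binomial_pmf N (1/2)) (\<lambda>l. map_pmf (\<lambda>w. addv (Fv N R l) (unitv w)) (step_pmf \<beta>))
     = bind_pmf (bernoulli_pmf (2*h)) (\<lambda>c. if c then map_pmf (Fv (Suc N) R) (binomial_pmf (Suc N) (1/2))
            else bind_pmf (rest_pmf k a b h \<beta>) (\<lambda>w. map_pmf (Fv N (addv R (unitv w))) (binomial_pmf N (1/2))))"
proof -
  have "bind_pmf (binomial_pmf N (1/2)) (\<lambda>l. map_pmf (\<lambda>w. addv (Fv N R l) (unitv w)) (step_pmf \<beta>))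
     = bind_pmf (bernoulli_pmf (2*h)) (\<lambda>c. bind_pmf (binomial_pmf N (1/2)) (\<lambda>l. map_pmf (\<lambda>w. addv (Fv N R l) (unitv w)) (if c then coin_pmf a b else rest_pmf k a b h \<beta>)))"
    unfolding step_decomp[OF assms] map_bind_pmf by (rule bind_commute_pmf)
  also have "\<dots> = bind_pmf (bernoulli_pmf (2*h)) (\<lambda>c. if c then map_pmf (Fv (Suc N) R) (binomial_pmf (Suc N) (1/2))
            else bind_pmf (rest_pmf k a b h \<beta>) (\<lambda>w. map_pmf (Fv N (addv R (unitv w))) (binomial_pmf N (1/2))))"
  proof (rule bind_pmf_cong[OF refl])
    fix c :: bool
    show "bind_pmf (binomial_pmf N (1/2)) (\<lambda>l. map_pmf (\<lambda>w. addv (Fv N R l) (unitv w)) (if c then coin_pmf a b else rest_pmf k a b h \<beta>))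
      = (if c then map_pmf (Fv (Suc N) R) (binomial_pmf (Suc N) (1/2))
            else bind_pmf (rest_pmf k a b h \<beta>) (\<lambda>w. map_pmf (Fv N (addv R (unitv w))) (binomial_pmf N (1/2))))"
    proof (cases c)
      case True
      have "map_pmf (Fv (Suc N) R) (binomial_pmf (Suc N) (1/2)) =
          bind_pmf (bernoulli_pmf (1/2)) (\<lambda>x. bind_pmf (binomial_pmf N (1/2)) (\<lambda>l. return_pmf (Fv (Suc N) R ((if x then 1 else 0) + l))))"
        by (subst binomial_pmf_Suc) (auto simp: map_bind_pmf)
      also have "\<dots> = bind_pmf (bernoulli_pmf (1/2)) (\<lambda>x. bind_pmf (binomial_pmf N (1/2)) (\<lambda>l. return_pmf (addv (Fv N R l) (unitv (if x then a else b)))))"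
      proof (intro bind_pmf_cong refl)
        fix x :: bool and l assume "l \<in> set_pmf (binomial_pmf N (1/2))"
        then have "l \<le> N" by simp
        then show "return_pmf (Fv (Suc N) R ((if x then 1 else 0) + l)) = return_pmf (addv (Fv N R l) (unitv (if x then a else b)))"
          using ab by (auto simp: Fv_def addv_def unitv_def fun_eq_iff of_nat_diff)
      qed
      also have "\<dots> = bind_pmf (binomial_pmf N (1/2)) (\<lambda>l. map_pmf (\<lambda>w. addv (Fv N R l) (unitv w)) (coin_pmf a b))"
        unfolding coin_pmf_def map_pmf_def bind_assoc_pmf bind_return_pmf by (rule bind_commute_pmf)
      finally show ?thesis using True by simp
    next
      case False
      have "bind_pmf (binomial_pmf N (1/2)) (\<lambda>l. map_pmf (\<lambda>w. addv (Fv N R l) (unitv w)) (rest_pmf k a b h \<beta>))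
          = bind_pmf (rest_pmf k a b h \<beta>) (\<lambda>w. map_pmf (\<lambda>l. addv (Fv N R l) (unitv w)) (binomial_pmf N (1/2)))"
        unfolding map_pmf_def by (rule bind_commute_pmf)
      also have "\<dots> = bind_pmf (rest_pmf k a b h \<beta>) (\<lambda>w. map_pmf (Fv N (addv R (unitv w))) (binomial_pmf N (1/2)))"
        by (intro bind_pmf_cong refl map_pmf_cong) (auto simp: Fv_def addv_def fun_eq_iff)
      finally show ?thesis using False by simp
    qed
  qed
  finally show ?thesis .
qed

lemma steps_decomp:
  assumes "\<And>t. 1 \<le> t \<Longrightarrow> good (\<beta> t)"
  shows "map_pmf cntv (steps_pmf \<beta> m) = bind_pmf (Qp \<beta> m) (\<lambda>(N,R). map_pmf (Fv N R) (binomial_pmf N (1/2)))"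
proof (induction m)
  case 0
  have "Fv 0 (\<lambda>_. 0) 0 = (\<lambda>_. 0)" by (simp add: Fv_def fun_eq_iff)
  then show ?case by (simp add: binomial_pmf_0 cntv_Nil bind_return_pmf)
next
  case (Suc m)
  have "map_pmf cntv (steps_pmf \<beta> (Suc m)) = bind_pmf (map_pmf cntv (steps_pmf \<beta> m)) (\<lambda>R'. map_pmf (\<lambda>w. addv R' (unitv w)) (step_pmf (\<beta> (Suc m))))"
    by (simp add: map_bind_pmf map_pmf_comp cntv_snoc bind_map_pmf)
  also have "\<dots> = bind_pmf (Qp \<beta> m) (\<lambda>(N,R). bind_pmf (binomial_pmf N (1/2)) (\<lambda>l. map_pmf (\<lambda>w. addv (Fv N R l) (unitv w)) (step_pmf (\<beta> (Suc m)))))"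
    unfolding Suc by (simp add: bind_assoc_pmf bind_map_pmf case_prod_beta case_prod_beta')
  also have "\<dots> = bind_pmf (Qp \<beta> m) (\<lambda>(N,R). bind_pmf (bernoulli_pmf (2*h)) (\<lambda>c. if c then map_pmf (Fv (Suc N) R) (binomial_pmf (Suc N) (1/2))
            else bind_pmf (rest_pmf k a b h (\<beta> (Suc m))) (\<lambda>w. map_pmf (Fv N (addv R (unitv w))) (binomial_pmf N (1/2)))))"
    using inner_decomp[OF assms[of "Suc m"]] by simp
  also have "\<dots> = bind_pmf (Qp \<beta> (Suc m)) (\<lambda>(N,R). map_pmf (Fv N R) (binomial_pmf N (1/2)))"
    by (simp add: bind_assoc_pmf case_prod_beta case_prod_beta' bind_return_pmf bind_map_pmf if_distrib[of "\<lambda>M. bind_pmf M _"] cong: if_cong)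
  finally show ?case .
qed

lemma ev_char:
  fixes w z :: "nat \<Rightarrow> int" and d :: nat
  assumes l: "l \<le> N" and wz: "\<And>c. c \<noteq> a \<Longrightarrow> c \<noteq> b \<Longrightarrow> w c = z c" and s: "w a + w b = z a + z b"
  shows "(\<forall>c<k. int d dvd Fv N w l c) \<longleftrightarrow>
     ((\<forall>c<k. c \<noteq> a \<longrightarrow> c \<noteq> b \<longrightarrow> int d dvd z c) \<and> int d dvd z a + z b + int N \<and> int d dvd int l + w a)"
proof -
  have Fa: "Fv N w l a = w a + int l" using ab by (simp add: Fv_def)
  have Fb: "Fv N w l b = w b + int N - int l" using ab l by (simp add: Fv_def of_nat_diff)
  have Fc: "c \<noteq> a \<Longrightarrow> c \<noteq> b \<Longrightarrow> Fv N w l c = z c" for c using wz by (simp add: Fv_def)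
  have sum: "Fv N w l a + Fv N w l b = z a + z b + int N" using Fa Fb s by simp
  show ?thesis
  proof
    assume H: "\<forall>c<k. int d dvd Fv N w l c"
    have "int d dvd Fv N w l a + Fv N w l b" using H ab by (simp add: dvd_add)
    then show "((\<forall>c<k. c \<noteq> a \<longrightarrow> c \<noteq> b \<longrightarrow> int d dvd z c) \<and> int d dvd z a + z b + int N \<and> int d dvd int l + w a)"
      using H Fc Fa ab sum by (auto simp: add.commute)
  next
    assume H: "((\<forall>c<k. c \<noteq> a \<longrightarrow> c \<noteq> b \<longrightarrow> int d dvd z c) \<and> int d dvd z a + z b + int N \<and> int d dvd int l + w a)"
    then have da: "int d dvd Fv N w l a" using Fa by (simp add: add.commute)
    have "int d dvd (z a + z b + int N) - Fv N w l a" using H da by (intro dvd_diff) auto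
    moreover have "(z a + z b + int N) - Fv N w l a = Fv N w l b" using sum by linarith
    ultimately have db: "int d dvd Fv N w l b" by simp
    show "\<forall>c<k. int d dvd Fv N w l c" using H da db Fc by metis
  qed
qed

lemma inner_shift:
  fixes z :: "nat \<Rightarrow> int" and d :: nat
  assumes "d > 0"
  shows "\<bar>measure_pmf.expectation (binomial_pmf N (1/2)) (\<lambda>l. if \<forall>c<k. int d dvd Fv N z l c then 1 else 0)
     - measure_pmf.expectation (binomial_pmf N (1/2)) (\<lambda>l. if \<forall>c<k. int d dvd Fv N (shiftv a b t z) l c then 1 else 0)\<bar>
     \<le> 2 / sqrt (real N + 1)"
proof -
  define P where "P = ((\<forall>c<k. c \<noteq> a \<longrightarrow> c \<noteq> b \<longrightarrow> int d dvd z c) \<and> int d dvd z a + z b + int N)"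
  have e1: "measure_pmf.expectation (binomial_pmf N (1/2)) (\<lambda>l. if \<forall>c<k. int d dvd Fv N z l c then 1 else (0::real))
      = measure_pmf.expectation (binomial_pmf N (1/2)) (\<lambda>l. if P \<and> int d dvd int l + z a then 1 else 0)"
    by (rule exp_cong_pmf) (auto simp: P_def ev_char[of _ N z z])
  have e2: "measure_pmf.expectation (binomial_pmf N (1/2)) (\<lambda>l. if \<forall>c<k. int d dvd Fv N (shiftv a b t z) l c then 1 else (0::real))
      = measure_pmf.expectation (binomial_pmf N (1/2)) (\<lambda>l. if P \<and> int d dvd int l + (z a + t) then 1 else 0)"
  proof (rule exp_cong_pmf)
    fix l assume "l \<in> set_pmf (binomial_pmf N (1/2))"
    then have l: "l \<le> N" by simp
    have "(\<forall>c<k. int d dvd Fv N (shiftv a b t z) l c) \<longleftrightarrow> P \<and> int d dvd int l + shiftv a b t z a"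
    proof -
      have "(\<forall>c<k. int d dvd Fv N (shiftv a b t z) l c) \<longleftrightarrow>
        ((\<forall>c<k. c \<noteq> a \<longrightarrow> c \<noteq> b \<longrightarrow> int d dvd z c) \<and> int d dvd z a + z b + int N \<and> int d dvd int l + shiftv a b t z a)"
        by (rule ev_char[OF l]) (use ab in \<open>auto simp: shiftv_def\<close>)
      then show ?thesis unfolding P_def by simp
    qed
    also have "shiftv a b t z a = z a + t" using ab by (simp add: shiftv_def)
    finally show "(if \<forall>c<k. int d dvd Fv N (shiftv a b t z) l c then 1 else 0) = (if P \<and> int d dvd int l + (z a + t) then (1::real) else 0)"
      by simp
  qed
  show ?thesis
  proof (cases P)
    case True
    then show ?thesis unfolding e1 e2 using bin1d[OF assms, of N "z a" "z a + t"] by simp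
  next
    case False
    then show ?thesis unfolding e1 e2 by simp
  qed
qed

lemma dir_bound:
  assumes good: "\<And>t. 1 \<le> t \<Longrightarrow> good (\<beta> t)" and d: "d > 0"
  shows "\<bar>Fd k \<beta> m d x - Fd k \<beta> m d (shiftv a b t x)\<bar> \<le> 2 / sqrt ((real m + 1) * (2*h))"
proof -
  define G where "G N z = measure_pmf.expectation (binomial_pmf N (1/2)) (\<lambda>l. if \<forall>c<k. int d dvd Fv N z l c then 1 else (0::real))" for N z
  have F: "Fd k \<beta> m d y = measure_pmf.expectation (Qp \<beta> m) (\<lambda>p. G (fst p) (addv y (snd p)))" for y
  proof -
    have "Fd k \<beta> m d y = measure_pmf.expectation (map_pmf cntv (steps_pmf \<beta> m)) (\<lambda>v. if \<forall>c<k. int d dvd y c + v c then 1 else (0::real))"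
      unfolding Fd_def by simp
    also have "\<dots> = measure_pmf.expectation (Qp \<beta> m) (\<lambda>p. measure_pmf.expectation (map_pmf (Fv (fst p) (snd p)) (binomial_pmf (fst p) (1/2))) (\<lambda>v. if \<forall>c<k. int d dvd y c + v c then 1 else (0::real)))"
      apply (subst steps_decomp[OF good], assumption)
      unfolding case_prod_beta' by (rule exp_bind_pmf[where B=1]) simp
    also have "\<dots> = measure_pmf.expectation (Qp \<beta> m) (\<lambda>p. G (fst p) (addv y (snd p)))"
      unfolding G_def by (simp add: Fv_def addv_def add.assoc)
    finally show ?thesis .
  qed
  have sh: "addv (shiftv a b t x) R = shiftv a b t (addv x R)" for R by (auto simp: addv_def shiftv_def fun_eq_iff)
  have "\<bar>Fd k \<beta> m d x - Fd k \<beta> m d (shiftv a b t x)\<bar> \<le> measure_pmf.expectation (Qp \<beta> m) (\<lambda>p. 2 / sqrt (real (fst p) + 1))"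
    unfolding F sh
  proof (rule exp_diff_bound[where B=1 and B'=2])
    fix p
    show "\<bar>G (fst p) (addv x (snd p))\<bar> \<le> 1" "\<bar>G (fst p) (shiftv a b t (addv x (snd p)))\<bar> \<le> 1"
      unfolding G_def by (rule exp_abs_le; simp)+
    show "\<bar>2 / sqrt (real (fst p) + 1)\<bar> \<le> 2"
    proof -
      have "1 \<le> sqrt (real (fst p) + 1)" by simp
      then show ?thesis by (simp add: divide_le_eq)
    qed
    show "\<bar>G (fst p) (addv x (snd p)) - G (fst p) (shiftv a b t (addv x (snd p)))\<bar> \<le> 2 / sqrt (real (fst p) + 1)"
      unfolding G_def by (rule inner_shift[OF d])
  qed
  also have "\<dots> = measure_pmf.expectation (map_pmf fst (Qp \<beta> m)) (\<lambda>N. 2 / sqrt (real N + 1))" by simp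
  also have "\<dots> = 2 * measure_pmf.expectation (binomial_pmf m (2*h)) (\<lambda>N. 1 / sqrt (real N + 1))"
    unfolding Qp_fst by (subst integral_mult_right_zero[symmetric]) simp
  also have "\<dots> \<le> 2 * (1 / sqrt ((real m + 1) * (2*h)))"
    using exp_binom_invsqrt[of "2*h" m] h by simp
  finally show ?thesis by simp
qed

end

lemma Fd_cong: "(\<And>c. c < k \<Longrightarrow> x c = y c) \<Longrightarrow> Fd k \<beta> m d x = Fd k \<beta> m d y"
  unfolding Fd_def by simp

lemma sum_shiftv:
  assumes "a < k" "b < k"
  shows "(\<Sum>c<k. shiftv a b t x c) = (\<Sum>c<k. x c)"
proof -
  have "(\<Sum>c<k. shiftv a b t x c) = (\<Sum>c<k. x c) + (\<Sum>c<k. (if c = a then t else 0)) - (\<Sum>c<k. (if c = b then t else 0))"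
    unfolding shiftv_def by (simp add: sum.distrib sum_subtractf)
  also have "\<dots> = (\<Sum>c<k. x c)" using assms by (simp add: sum.delta)
  finally show ?thesis .
qed

lemma key_bound:
  fixes \<beta> :: "nat \<Rightarrow> real list" and c0 :: real and x y :: "nat \<Rightarrow> int"
  assumes k: "k \<ge> 2" and c0: "0 < c0" "c0 \<le> 1/2"
    and vt: "\<And>t. 1 \<le> t \<Longrightarrow> valid_type k (\<beta> t)" and lb: "\<And>t j. 1 \<le> t \<Longrightarrow> j < k \<Longrightarrow> c0 \<le> \<beta> t ! j"
    and d: "d > 0" and sum: "(\<Sum>c<k. x c) = (\<Sum>c<k. y c)"
  shows "\<bar>Fd k \<beta> m d x - Fd k \<beta> m d y\<bar> \<le> real (k - 1) * (2 / sqrt ((real m + 1) * c0))"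
proof -
  define B where "B = 2 / sqrt ((real m + 1) * c0)"
  have dir: "\<bar>Fd k \<beta> m d z - Fd k \<beta> m d (shiftv a 0 t z)\<bar> \<le> B" if a: "1 \<le> a" "a < k" for a z t
  proof -
    interpret extr k a 0 "c0/2" by standard (use a c0 in auto)
    have "\<bar>Fd k \<beta> m d z - Fd k \<beta> m d (shiftv a 0 t z)\<bar> \<le> 2 / sqrt ((real m + 1) * (2*(c0/2)))"
    proof (rule dir_bound[OF _ d])
      fix t :: nat assume "1 \<le> t"
      then show "good (\<beta> t)" unfolding good_def using vt lb[of t a] lb[of t 0] a c0 by auto
    qed
    then show ?thesis unfolding B_def by simp
  qed
  have main: "\<forall>x y. (\<Sum>c<k. x c) = (\<Sum>c<k. y c) \<longrightarrow> (\<forall>c. r < c \<longrightarrow> c < k \<longrightarrow> x c = y c) \<longrightarrow>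
      \<bar>Fd k \<beta> m d x - Fd k \<beta> m d y\<bar> \<le> real r * B" if "r < k" for r
    using that
  proof (induction r)
    case 0
    show ?case
    proof (intro allI impI)
      fix x y :: "nat \<Rightarrow> int"
      assume s: "(\<Sum>c<k. x c) = (\<Sum>c<k. y c)" and e: "\<forall>c. 0 < c \<longrightarrow> c < k \<longrightarrow> x c = y c"
      obtain k' where k': "k = Suc k'" using k by (cases k) auto
      have "(\<Sum>c<k. x c) = x 0 + (\<Sum>c<k'. x (Suc c))" unfolding k' by (rule sum.lessThan_Suc_shift)
      moreover have "(\<Sum>c<k. y c) = y 0 + (\<Sum>c<k'. y (Suc c))" unfolding k' by (rule sum.lessThan_Suc_shift)
      moreover have "(\<Sum>c<k'. x (Suc c)) = (\<Sum>c<k'. y (Suc c))" using e k' by (intro sum.cong) auto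
      ultimately have "x 0 = y 0" using s by simp
      then have "Fd k \<beta> m d x = Fd k \<beta> m d y" using e by (intro Fd_cong) (metis neq0_conv)
      then show "\<bar>Fd k \<beta> m d x - Fd k \<beta> m d y\<bar> \<le> real 0 * B" by simp
    qed
  next
    case (Suc r)
    show ?case
    proof (intro allI impI)
      fix x y :: "nat \<Rightarrow> int"
      assume s: "(\<Sum>c<k. x c) = (\<Sum>c<k. y c)" and e: "\<forall>c. Suc r < c \<longrightarrow> c < k \<longrightarrow> x c = y c"
      define x' where "x' = shiftv (Suc r) 0 (y (Suc r) - x (Suc r)) x"
      have s': "(\<Sum>c<k. x' c) = (\<Sum>c<k. y c)" unfolding x'_def using Suc.prems s by (subst sum_shiftv) auto
      have e': "\<forall>c. r < c \<longrightarrow> c < k \<longrightarrow> x' c = y c"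
      proof (intro allI impI)
        fix c assume c: "r < c" "c < k"
        show "x' c = y c"
        proof (cases "c = Suc r")
          case True then show ?thesis unfolding x'_def shiftv_def by simp
        next
          case False
          then have "Suc r < c" using c by simp
          then show ?thesis using e c False unfolding x'_def shiftv_def by simp
        qed
      qed
      have "\<bar>Fd k \<beta> m d x - Fd k \<beta> m d x'\<bar> \<le> B" unfolding x'_def by (rule dir) (use Suc.prems in auto)
      moreover have "\<bar>Fd k \<beta> m d x' - Fd k \<beta> m d y\<bar> \<le> real r * B" using Suc.IH Suc.prems s' e' by auto
      ultimately show "\<bar>Fd k \<beta> m d x - Fd k \<beta> m d y\<bar> \<le> real (Suc r) * B" by (simp add: algebra_simps)
    qed
  qed
  have "k - 1 < k" using k by simp
  moreover have "\<forall>c. k - 1 < c \<longrightarrow> c < k \<longrightarrow> x c = y c" by auto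
  ultimately have "\<bar>Fd k \<beta> m d x - Fd k \<beta> m d y\<bar> \<le> real (k - 1) * B" using main sum by blast
  then show ?thesis unfolding B_def .
qed

lemma Gcd_one_iff_primes:
  fixes S :: "int set"
  shows "Gcd S = 1 \<longleftrightarrow> (\<forall>p::nat. prime p \<longrightarrow> \<not> (\<forall>z\<in>S. int p dvd z))"
proof
  assume g: "Gcd S = 1"
  show "\<forall>p::nat. prime p \<longrightarrow> \<not> (\<forall>z\<in>S. int p dvd z)"
  proof (intro allI impI notI)
    fix p :: nat assume p: "prime p" and all: "\<forall>z\<in>S. int p dvd z"
    then have "int p dvd Gcd S" by (intro Gcd_greatest) auto
    then have "p dvd 1" using g by simp
    then show False using p by simp
  qed
next
  assume H: "\<forall>p::nat. prime p \<longrightarrow> \<not> (\<forall>z\<in>S. int p dvd z)"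
  show "Gcd S = 1"
  proof (rule ccontr)
    assume ne: "Gcd S \<noteq> 1"
    have ge: "Gcd S \<ge> 0" by simp
    then have "nat (Gcd S) \<noteq> 1" using ne by (metis int_nat_eq of_nat_1)
    then obtain p where p: "prime p" "p dvd nat (Gcd S)" using prime_factor_nat by blast
    then have "int p dvd Gcd S" using ge by (metis int_dvd_int_iff int_nat_eq)
    then have "\<forall>z\<in>S. int p dvd z" by (meson Gcd_dvd dvd_trans)
    then show False using H p by blast
  qed
qed

lemma prod_primes_dvd:
  fixes X :: "nat set" and z :: int
  assumes "finite X" "\<forall>p\<in>X. prime p"
  shows "(\<forall>p\<in>X. int p dvd z) \<longleftrightarrow> int (\<Prod>X) dvd z"
proof
  show "int (\<Prod>X) dvd z \<Longrightarrow> \<forall>p\<in>X. int p dvd z"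
    using assms(1) by (meson dvd_prod_eqI dvd_trans int_dvd_int_iff)
next
  show "\<forall>p\<in>X. int p dvd z \<Longrightarrow> int (\<Prod>X) dvd z"
    using assms
  proof (induction X rule: finite_induct)
    case empty
    then show ?case by simp
  next
    case (insert p X)
    have pp: "prime (int p)" using insert by simp
    have nd: "\<not> int p dvd (\<Prod>q\<in>X. int q)"
    proof
      assume "int p dvd (\<Prod>q\<in>X. int q)"
      then obtain q where q: "q \<in> X" "int p dvd int q" using prime_dvd_prod_iff[OF insert(1) pp] by auto
      then have "p = q" using insert(5) primes_dvd_imp_eq[of p q] by auto
      then show False using q insert(2) by simp
    qed
    have cop: "coprime (int p) (\<Prod>q\<in>X. int q)" by (rule prime_imp_coprime[OF pp nd])
    have "int p * (\<Prod>q\<in>X. int q) dvd z"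
      using insert by (intro divides_mult cop) auto
    then show ?case using insert(1,2) by simp
  qed
qed

lemma prod_prime_factors_le:
  fixes j :: nat assumes "j > 0"
  shows "\<Prod>(prime_factors j) \<le> j"
proof -
  have "int (\<Prod>(prime_factors j)) dvd int j"
    by (subst prod_primes_dvd[symmetric]) (auto simp: in_prime_factors_iff)
  then have "\<Prod>(prime_factors j) dvd j" by (simp only: int_dvd_int_iff)
  then show ?thesis using assms by (simp add: dvd_imp_le)
qed

lemma omega_bound:
  fixes \<epsilon> :: real
  assumes "\<epsilon> > 0"
  shows "\<exists>C>0. \<forall>j>0. 2 ^ card (prime_factors j) \<le> C * real j powr \<epsilon>"
proof -
  define T where "T = nat \<lceil>2 powr (1/\<epsilon>)\<rceil>"
  have T: "2 powr (1/\<epsilon>) \<le> real T" unfolding T_def by linarith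
  have big: "2 \<le> real p powr \<epsilon>" if "T \<le> p" for p :: nat
  proof -
    have "2 = (2 powr (1/\<epsilon>)) powr \<epsilon>" using assms by (simp add: powr_powr)
    also have "\<dots> \<le> real T powr \<epsilon>" using T assms by (intro powr_mono2) auto
    also have "\<dots> \<le> real p powr \<epsilon>" using that assms by (intro powr_mono2) auto
    finally show ?thesis .
  qed
  show ?thesis
  proof (intro exI[of _ "2 ^ T"] conjI allI impI)
    show "(0::real) < 2 ^ T" by simp
    fix j :: nat assume j: "j > 0"
    define P where "P = prime_factors j"
    define P1 where "P1 = {p\<in>P. p < T}"
    define P2 where "P2 = {p\<in>P. \<not> p < T}"
    have fin: "finite P" unfolding P_def by simp
    have Pu: "P = P1 \<union> P2" "P1 \<inter> P2 = {}" unfolding P1_def P2_def by auto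
    have f1: "finite P1" "finite P2" using fin unfolding P1_def P2_def by auto
    have cP: "card P = card P1 + card P2" using Pu f1 by (simp add: card_Un_disjoint)
    have c1: "card P1 \<le> T"
    proof -
      have "P1 \<subseteq> {..<T}" unfolding P1_def by auto
      then show ?thesis using card_mono[of "{..<T}" P1] by simp
    qed
    have pge: "p \<ge> 2" if "p \<in> P" for p using that unfolding P_def by (simp add: in_prime_factors_iff prime_ge_2_nat)
    have "(2::real) ^ card P2 = (\<Prod>p\<in>P2. 2)" by simp
    also have "\<dots> \<le> (\<Prod>p\<in>P2. real p powr \<epsilon>)"
      by (intro prod_mono) (auto simp: P2_def big)
    also have "\<dots> \<le> (\<Prod>p\<in>P2. real p powr \<epsilon>) * (\<Prod>p\<in>P1. real p powr \<epsilon>)"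
    proof -
      have "1 \<le> (\<Prod>p\<in>P1. real p powr \<epsilon>)"
      proof (rule prod_ge_1)
        fix p assume "p \<in> P1"
        then have "p \<ge> 2" using pge unfolding P1_def by auto
        then show "1 \<le> real p powr \<epsilon>" using assms by (intro ge_one_powr_ge_zero) auto
      qed
      moreover have "0 \<le> (\<Prod>p\<in>P2. real p powr \<epsilon>)" by (intro prod_nonneg) auto
      ultimately show ?thesis by (metis mult_cancel_left1 mult_left_mono)
    qed
    also have "\<dots> = (\<Prod>p\<in>P. real p powr \<epsilon>)" unfolding Pu(1) using f1 Pu(2) by (simp add: prod.union_disjoint mult.commute)
    also have "\<dots> = (\<Prod>p\<in>P. real p) powr \<epsilon>" by (simp add: prod_powr_distrib)
    also have "(\<Prod>p\<in>P. real p) powr \<epsilon> \<le> real j powr \<epsilon>"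
    proof (rule powr_mono2)
      have "(\<Prod>p\<in>P. real p) = real (\<Prod>P)" by simp
      also have "\<dots> \<le> real j" using prod_prime_factors_le[OF j] unfolding P_def by (simp only: of_nat_le_iff)
      finally show "(\<Prod>p\<in>P. real p) \<le> real j" .
    qed (use assms in \<open>auto intro: prod_nonneg\<close>)
    finally have h2: "(2::real) ^ card P2 \<le> real j powr \<epsilon>" .
    have "(2::real) ^ card P = 2 ^ card P1 * 2 ^ card P2" by (simp add: cP power_add)
    also have "\<dots> \<le> 2 ^ T * real j powr \<epsilon>"
      using h2 c1 by (intro mult_mono) (auto intro: power_increasing)
    finally show "2 ^ card (prime_factors j) \<le> 2 ^ T * real j powr \<epsilon>" unfolding P_def .
  qed
qed

lemma prod_indicator:
  fixes Q :: "'a \<Rightarrow> bool"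
  assumes "finite P"
  shows "(\<Prod>p\<in>P. (if Q p then 1 else 0 :: real)) = (if \<forall>p\<in>P. Q p then 1 else 0)"
  using assms by (induction P rule: finite_induct) auto

lemma vis_incl_excl:
  fixes f :: "nat \<Rightarrow> int" and j :: nat
  assumes j: "j > 0" and s: "(\<Sum>c<k. f c) = int j"
  shows "(if visible (map f [0..<k]) then 1 else 0 :: real) =
     (\<Sum>X\<in>Pow (prime_factors j). (-1) ^ card X * (if \<forall>c<k. int (\<Prod>X) dvd f c then 1 else 0))"
proof -
  define P where "P = prime_factors j"
  have fin: "finite P" unfolding P_def by simp
  have "visible (map f [0..<k]) \<longleftrightarrow> (\<forall>p::nat. prime p \<longrightarrow> \<not> (\<forall>z\<in>f ` {..<k}. int p dvd z))"
    unfolding visible_def by (simp add: Gcd_one_iff_primes atLeast0LessThan)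
  also have "\<dots> \<longleftrightarrow> (\<forall>p\<in>P. \<not> (\<forall>c<k. int p dvd f c))"
  proof
    assume "\<forall>p::nat. prime p \<longrightarrow> \<not> (\<forall>z\<in>f ` {..<k}. int p dvd z)"
    then show "\<forall>p\<in>P. \<not> (\<forall>c<k. int p dvd f c)" unfolding P_def by (auto simp: in_prime_factors_iff)
  next
    assume H: "\<forall>p\<in>P. \<not> (\<forall>c<k. int p dvd f c)"
    show "\<forall>p::nat. prime p \<longrightarrow> \<not> (\<forall>z\<in>f ` {..<k}. int p dvd z)"
    proof (intro allI impI notI)
      fix p :: nat assume p: "prime p" and all: "\<forall>z\<in>f ` {..<k}. int p dvd z"
      then have "int p dvd (\<Sum>c<k. f c)" by (intro dvd_sum) auto
      then have "p dvd j" using s by simp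
      then have "p \<in> P" unfolding P_def using p j by (simp add: in_prime_factors_iff)
      then show False using H all by auto
    qed
  qed
  finally have vis: "visible (map f [0..<k]) \<longleftrightarrow> (\<forall>p\<in>P. \<not> (\<forall>c<k. int p dvd f c))" .
  define A where "A p = (if \<forall>c<k. int p dvd f c then 1 else 0 :: real)" for p
  have "(if visible (map f [0..<k]) then 1 else 0 :: real) = (\<Prod>p\<in>P. (if (\<not> (\<forall>c<k. int p dvd f c)) then 1 else 0))"
    unfolding vis prod_indicator[OF fin] by simp
  also have "\<dots> = (\<Prod>p\<in>P. - A p + 1)" unfolding A_def by (intro prod.cong) auto
  also have "\<dots> = (\<Sum>X\<in>Pow P. (\<Prod>p\<in>X. - A p) * (\<Prod>p\<in>P - X. 1))" by (rule prod_add[OF fin])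
  also have "\<dots> = (\<Sum>X\<in>Pow P. (-1) ^ card X * (if \<forall>c<k. int (\<Prod>X) dvd f c then 1 else 0))"
  proof (intro sum.cong refl)
    fix X assume X: "X \<in> Pow P"
    then have fX: "finite X" using fin finite_subset by auto
    have pr: "\<forall>p\<in>X. prime p" using X unfolding P_def by (auto simp: in_prime_factors_iff)
    have "(\<Prod>p\<in>X. - A p) = (\<Prod>p\<in>X. (-1) * A p)" by simp
    also have "\<dots> = (-1) ^ card X * (\<Prod>p\<in>X. A p)" by (simp only: prod.distrib prod_constant)
    also have "(\<Prod>p\<in>X. A p) = (if \<forall>p\<in>X. \<forall>c<k. int p dvd f c then 1 else 0)"
      unfolding A_def by (rule prod_indicator[OF fX])
    also have "(\<forall>p\<in>X. \<forall>c<k. int p dvd f c) \<longleftrightarrow> (\<forall>c<k. int (\<Prod>X) dvd f c)"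
      using prod_primes_dvd[OF fX pr] by blast
    finally show "(\<Prod>p\<in>X. - A p) * (\<Prod>p\<in>P - X. 1) = (-1) ^ card X * (if \<forall>c<k. int (\<Prod>X) dvd f c then 1 else 0)"
      by simp
  qed
  finally show ?thesis unfolding P_def .
qed

definition visind :: "nat \<Rightarrow> (nat \<Rightarrow> int) \<Rightarrow> real" where
  "visind k v = (if visible (map v [0..<k]) then 1 else 0)"

lemma X_ind_visind: "X_ind k ws i = visind k (cntv (take i ws))"
  unfolding X_ind_def visind_def walk_pos_def cntv_def by simp

lemma visind_bounds: "0 \<le> visind k v" "visind k v \<le> 1" "\<bar>visind k v\<bar> \<le> 1"
  unfolding visind_def by auto

lemma cntv_append: "cntv (xs @ ys) = addv (cntv xs) (cntv ys)"
  by (auto simp: cntv_def addv_def fun_eq_iff)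

lemma sum_cntv: "set ws \<subseteq> {..<k} \<Longrightarrow> (\<Sum>c<k. cntv ws c) = int (length ws)"
proof (induction ws)
  case Nil
  then show ?case by (simp add: cntv_def)
next
  case (Cons w ws)
  have "(\<Sum>c<k. cntv (w # ws) c) = (\<Sum>c<k. (if w = c then 1 else 0) + cntv ws c)"
    by (intro sum.cong) (auto simp: cntv_def)
  also have "\<dots> = 1 + (\<Sum>c<k. cntv ws c)" using Cons.prems by (simp add: sum.distrib)
  finally show ?case using Cons by simp
qed

lemma finite_set_steps:
  assumes "\<forall>t\<ge>1. valid_type k (ch t)"
  shows "finite (set_pmf (steps_pmf ch n))"
proof (induction n)
  case 0
  then show ?case by simp
next
  case (Suc n)
  have "valid_type k (ch (Suc n))" using assms by simp
  then have "finite (set_pmf (step_pmf (ch (Suc n))))" using set_step by simp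
  then show ?case using Suc by simp
qed

definition Gf :: "nat \<Rightarrow> (nat \<Rightarrow> real list) \<Rightarrow> nat \<Rightarrow> (nat \<Rightarrow> int) \<Rightarrow> real" where
  "Gf k \<beta> m x = measure_pmf.expectation (steps_pmf \<beta> m) (\<lambda>vs. visind k (addv x (cntv vs)))"

lemma Gf_sum:
  assumes vt: "\<forall>t\<ge>1. valid_type k (\<beta> t)" and s: "(\<Sum>c<k. x c) = int i" and pos: "i + m > 0"
  shows "Gf k \<beta> m x = (\<Sum>X\<in>Pow (prime_factors (i + m)). (-1) ^ card X * Fd k \<beta> m (\<Prod>X) x)"
proof -
  have fin: "finite (set_pmf (steps_pmf \<beta> m))" by (rule finite_set_steps[OF vt])
  have "Gf k \<beta> m x = measure_pmf.expectation (steps_pmf \<beta> m)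
      (\<lambda>vs. (\<Sum>X\<in>Pow (prime_factors (i + m)). (-1) ^ card X * (if \<forall>c<k. int (\<Prod>X) dvd x c + cntv vs c then 1 else 0)))"
    unfolding Gf_def
  proof (rule exp_cong_pmf)
    fix vs assume "vs \<in> set_pmf (steps_pmf \<beta> m)"
    then have l: "length vs = m \<and> set vs \<subseteq> {..<k}" using set_steps[OF vt] by blast
    have "(\<Sum>c<k. addv x (cntv vs) c) = (\<Sum>c<k. x c) + (\<Sum>c<k. cntv vs c)"
      unfolding addv_def by (rule sum.distrib)
    also have "\<dots> = int (i + m)" using s sum_cntv[of vs k] l by simp
    finally have ss: "(\<Sum>c<k. addv x (cntv vs) c) = int (i + m)" .
    have "visind k (addv x (cntv vs)) = (\<Sum>X\<in>Pow (prime_factors (i + m)). (-1) ^ card X * (if \<forall>c<k. int (\<Prod>X) dvd addv x (cntv vs) c then 1 else 0))"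
      unfolding visind_def by (rule vis_incl_excl[OF pos ss])
    then show "visind k (addv x (cntv vs)) = (\<Sum>X\<in>Pow (prime_factors (i + m)). (-1) ^ card X * (if \<forall>c<k. int (\<Prod>X) dvd x c + cntv vs c then 1 else 0))"
      by (simp only: addv_def)
  qed
  also have "\<dots> = (\<Sum>X\<in>Pow (prime_factors (i + m)). measure_pmf.expectation (steps_pmf \<beta> m) (\<lambda>vs. (-1) ^ card X * (if \<forall>c<k. int (\<Prod>X) dvd x c + cntv vs c then 1 else 0)))"
    by (rule Bochner_Integration.integral_sum[where I="Pow (prime_factors (i + m))" and M="measure_pmf (steps_pmf \<beta> m)"
        and f="\<lambda>X vs. (-1) ^ card X * (if \<forall>c<k. int (\<Prod>X) dvd x c + cntv vs c then 1 else (0::real))"])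
       (rule integrable_measure_pmf_finite[OF fin])
  also have "\<dots> = (\<Sum>X\<in>Pow (prime_factors (i + m)). (-1) ^ card X * Fd k \<beta> m (\<Prod>X) x)"
    unfolding Fd_def by (intro sum.cong refl) (rule integral_mult_right_zero)
  finally show ?thesis .
qed

lemma Gf_diff:
  fixes \<beta> :: "nat \<Rightarrow> real list" and c0 :: real and x y :: "nat \<Rightarrow> int"
  assumes k: "k \<ge> 2" and c0: "0 < c0" "c0 \<le> 1/2"
    and vt: "\<forall>t\<ge>1. valid_type k (\<beta> t)" and lb: "\<And>t j. 1 \<le> t \<Longrightarrow> j < k \<Longrightarrow> c0 \<le> \<beta> t ! j"
    and sx: "(\<Sum>c<k. x c) = int i" and sy: "(\<Sum>c<k. y c) = int i" and pos: "i + m > 0"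
  shows "\<bar>Gf k \<beta> m x - Gf k \<beta> m y\<bar> \<le> 2 ^ card (prime_factors (i + m)) * (real (k - 1) * (2 / sqrt ((real m + 1) * c0)))"
proof -
  define B where "B = real (k - 1) * (2 / sqrt ((real m + 1) * c0))"
  define P where "P = prime_factors (i + m)"
  define D where "D X = Fd k \<beta> m (\<Prod>X) x - Fd k \<beta> m (\<Prod>X) y" for X
  have e1: "Gf k \<beta> m x - Gf k \<beta> m y = (\<Sum>X\<in>Pow P. (-1) ^ card X * D X)"
    unfolding Gf_sum[OF vt sx pos] Gf_sum[OF vt sy pos] P_def D_def
    by (simp only: sum_subtractf[symmetric] right_diff_distrib)
  have e2: "\<bar>\<Sum>X\<in>Pow P. (-1) ^ card X * D X\<bar> \<le> (\<Sum>X\<in>Pow P. \<bar>(-1) ^ card X * D X\<bar>)"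
    by (rule sum_abs)
  have e3: "(\<Sum>X\<in>Pow P. \<bar>(-1) ^ card X * D X\<bar>) \<le> (\<Sum>X\<in>Pow P. B)"
  proof (rule sum_mono)
    fix X assume X: "X \<in> Pow P"
    have fP: "finite P" unfolding P_def by simp
    have fX: "finite X" using X fP by (metis PowD finite_subset)
    have pX: "\<Prod>X > 0" using X fX unfolding P_def by (intro prod_pos) (auto simp: in_prime_factors_iff prime_gt_0_nat)
    have "\<bar>D X\<bar> \<le> B"
      unfolding B_def D_def
    proof (rule key_bound[OF k c0 _ lb])
      show "\<And>t. 1 \<le> t \<Longrightarrow> valid_type k (\<beta> t)" using vt by blast
      show "0 < \<Prod>X" by (rule pX)
      show "(\<Sum>c<k. x c) = (\<Sum>c<k. y c)" using sx sy by simp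
    qed
    then show "\<bar>(-1) ^ card X * D X\<bar> \<le> B"
      by (simp add: abs_mult)
  qed
  have fP: "finite P" unfolding P_def by simp
  have e4: "(\<Sum>X\<in>Pow P. B) = 2 ^ card P * B"
    using card_Pow[OF fP] by simp
  show ?thesis using e1 e2 e3 e4 unfolding B_def P_def by linarith
qed

lemma exp_lin:
  fixes f :: "'b \<Rightarrow> real"
  assumes "finite (set_pmf M)"
  shows "measure_pmf.expectation M (\<lambda>x. c * (f x - a)) = c * (measure_pmf.expectation M f - a)"
proof -
  have "measure_pmf.expectation M (\<lambda>x. c * (f x - a)) = c * measure_pmf.expectation M (\<lambda>x. f x - a)"
    by (rule integral_mult_right_zero)
  also have "measure_pmf.expectation M (\<lambda>x. f x - a) = measure_pmf.expectation M f - measure_pmf.expectation M (\<lambda>x. a)"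
    by (rule Bochner_Integration.integral_diff) (use assms in \<open>auto intro: integrable_measure_pmf_finite\<close>)
  also have "measure_pmf.expectation M (\<lambda>x. a) = a" by simp
  finally show ?thesis .
qed

lemma cov_bound:
  fixes ch :: "nat \<Rightarrow> real list" and c0 ai :: real
  assumes k: "k \<ge> 2" and c0: "0 < c0" "c0 \<le> 1/2"
    and vt: "\<forall>t\<ge>1. valid_type k (ch t)" and lb: "\<And>t j. 1 \<le> t \<Longrightarrow> j < k \<Longrightarrow> c0 \<le> ch t ! j"
    and ij: "1 \<le> i" "i < j" "j \<le> n" and ai: "0 \<le> ai" "ai \<le> 1"
  shows "\<bar>measure_pmf.expectation (steps_pmf ch n)
            (\<lambda>ws. (X_ind k ws i - ai) * (X_ind k ws j - measure_pmf.expectation (steps_pmf ch n) (\<lambda>ws. X_ind k ws j)))\<bar>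
         \<le> 2 ^ card (prime_factors j) * (real (k - 1) * (2 / sqrt ((real (j - i) + 1) * c0)))"
proof -
  define \<beta> where "\<beta> t = ch (i + t)" for t
  define m where "m = j - i"
  define Bd where "Bd = 2 ^ card (prime_factors j) * (real (k - 1) * (2 / sqrt ((real (j - i) + 1) * c0)))"
  define aj where "aj = measure_pmf.expectation (steps_pmf ch n) (\<lambda>ws. X_ind k ws j)"
  define Gw where "Gw ws = Gf k \<beta> m (cntv ws)" for ws
  have vtb: "\<forall>t\<ge>1. valid_type k (\<beta> t)" unfolding \<beta>_def using vt by simp
  have lbb: "\<And>t j. 1 \<le> t \<Longrightarrow> j < k \<Longrightarrow> c0 \<le> \<beta> t ! j" unfolding \<beta>_def using lb by simp
  have finb: "finite (set_pmf (steps_pmf \<beta> m))" by (rule finite_set_steps[OF vtb])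
  have fini: "finite (set_pmf (steps_pmf ch i))" by (rule finite_set_steps[OF vt])
  have nsplit: "steps_pmf ch n = bind_pmf (steps_pmf ch i) (\<lambda>ws. map_pmf (\<lambda>vs. ws @ vs) (steps_pmf \<beta> (n - i)))"
    using steps_split[of ch i "n - i"] ij unfolding \<beta>_def by simp
  have mle: "m \<le> n - i" unfolding m_def using ij by simp
  have jm: "j = i + m" unfolding m_def using ij by simp
  have tk: "take j (ws @ vs) = ws @ take m vs" if "length ws = i" for ws vs :: "nat list"
    using that jm by simp
  have ti: "take i (ws @ vs) = ws" if "length ws = i" for ws vs :: "nat list"
    using that by simp
  have aj_eq: "aj = measure_pmf.expectation (steps_pmf ch i) Gw"
  proof -
    have "aj = measure_pmf.expectation (steps_pmf ch i) (\<lambda>ws. measure_pmf.expectation (steps_pmf \<beta> (n - i)) (\<lambda>vs. X_ind k (ws @ vs) j))"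
      unfolding aj_def nsplit by (subst exp_bind_pmf[where B=1]) (auto simp: X_ind_def)
    also have "\<dots> = measure_pmf.expectation (steps_pmf ch i) Gw"
    proof (rule exp_cong_pmf)
      fix ws assume "ws \<in> set_pmf (steps_pmf ch i)"
      then have l: "length ws = i" using set_steps[OF vt] by blast
      have "measure_pmf.expectation (steps_pmf \<beta> (n - i)) (\<lambda>vs. X_ind k (ws @ vs) j)
          = measure_pmf.expectation (steps_pmf \<beta> (n - i)) (\<lambda>vs. (\<lambda>us. visind k (addv (cntv ws) (cntv us))) (take m vs))"
        by (rule exp_cong_pmf) (simp only: X_ind_visind tk[OF l] cntv_append)
      also have "\<dots> = measure_pmf.expectation (steps_pmf \<beta> m) (\<lambda>us. visind k (addv (cntv ws) (cntv us)))"
        by (rule exp_steps_take[OF mle]) (rule visind_bounds)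
      finally show "measure_pmf.expectation (steps_pmf \<beta> (n - i)) (\<lambda>vs. X_ind k (ws @ vs) j) = Gw ws"
        unfolding Gw_def Gf_def .
    qed
    finally show ?thesis .
  qed
  have cov_eq: "measure_pmf.expectation (steps_pmf ch n) (\<lambda>ws. (X_ind k ws i - ai) * (X_ind k ws j - aj))
      = measure_pmf.expectation (steps_pmf ch i) (\<lambda>ws. (visind k (cntv ws) - ai) * (Gw ws - aj))"
  proof -
    have "measure_pmf.expectation (steps_pmf ch n) (\<lambda>ws. (X_ind k ws i - ai) * (X_ind k ws j - aj))
      = measure_pmf.expectation (steps_pmf ch i) (\<lambda>ws. measure_pmf.expectation (steps_pmf \<beta> (n - i)) (\<lambda>vs. (X_ind k (ws @ vs) i - ai) * (X_ind k (ws @ vs) j - aj)))"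
      unfolding nsplit
    proof (subst exp_bind_pmf[where B="(1 + \<bar>ai\<bar>) * (1 + \<bar>aj\<bar>)"])
      fix ws :: "nat list"
      have "\<bar>X_ind k ws i - ai\<bar> \<le> 1 + \<bar>ai\<bar>" "\<bar>X_ind k ws j - aj\<bar> \<le> 1 + \<bar>aj\<bar>" by (auto simp: X_ind_def)
      then show "\<bar>(X_ind k ws i - ai) * (X_ind k ws j - aj)\<bar> \<le> (1 + \<bar>ai\<bar>) * (1 + \<bar>aj\<bar>)"
        unfolding abs_mult by (intro mult_mono) auto
    qed simp
    also have "\<dots> = measure_pmf.expectation (steps_pmf ch i) (\<lambda>ws. (visind k (cntv ws) - ai) * (Gw ws - aj))"
    proof (rule exp_cong_pmf)
      fix ws assume "ws \<in> set_pmf (steps_pmf ch i)"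
      then have l: "length ws = i" using set_steps[OF vt] by blast
      have "measure_pmf.expectation (steps_pmf \<beta> (n - i)) (\<lambda>vs. (X_ind k (ws @ vs) i - ai) * (X_ind k (ws @ vs) j - aj))
          = measure_pmf.expectation (steps_pmf \<beta> (n - i)) (\<lambda>vs. (\<lambda>us. (visind k (cntv ws) - ai) * (visind k (addv (cntv ws) (cntv us)) - aj)) (take m vs))"
        by (rule exp_cong_pmf) (simp only: X_ind_visind tk[OF l] ti[OF l] cntv_append)
      also have "\<dots> = measure_pmf.expectation (steps_pmf \<beta> m) (\<lambda>us. (visind k (cntv ws) - ai) * (visind k (addv (cntv ws) (cntv us)) - aj))"
      proof (rule exp_steps_take[OF mle])
        fix us
        have "\<bar>visind k (cntv ws) - ai\<bar> \<le> 1 + \<bar>ai\<bar>" "\<bar>visind k (addv (cntv ws) (cntv us)) - aj\<bar> \<le> 1 + \<bar>aj\<bar>"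
          by (auto simp: visind_def)
        then show "\<bar>(visind k (cntv ws) - ai) * (visind k (addv (cntv ws) (cntv us)) - aj)\<bar> \<le> (1 + \<bar>ai\<bar>) * (1 + \<bar>aj\<bar>)"
          unfolding abs_mult by (intro mult_mono) auto
      qed
      also have "\<dots> = (visind k (cntv ws) - ai) * (Gw ws - aj)"
        unfolding Gw_def Gf_def by (rule exp_lin[OF finb])
      finally show "measure_pmf.expectation (steps_pmf \<beta> (n - i)) (\<lambda>vs. (X_ind k (ws @ vs) i - ai) * (X_ind k (ws @ vs) j - aj))
          = (visind k (cntv ws) - ai) * (Gw ws - aj)" .
    qed
    finally show ?thesis .
  qed
  have impos: "0 < i + m" using ij(1) by simp
  have gdiff: "\<bar>Gw ws - Gw ws'\<bar> \<le> Bd" if "ws \<in> set_pmf (steps_pmf ch i)" "ws' \<in> set_pmf (steps_pmf ch i)" for ws ws'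
  proof -
    have s1: "(\<Sum>c<k. cntv ws c) = int i" using that(1) set_steps[OF vt] sum_cntv by metis
    have s2: "(\<Sum>c<k. cntv ws' c) = int i" using that(2) set_steps[OF vt] sum_cntv by metis
    have "\<bar>Gw ws - Gw ws'\<bar> \<le> 2 ^ card (prime_factors (i + m)) * (real (k - 1) * (2 / sqrt ((real m + 1) * c0)))"
      unfolding Gw_def by (rule Gf_diff[OF k c0 vtb lbb s1 s2 impos])
    moreover have e: "i + m = j" using jm by simp
    ultimately show ?thesis unfolding Bd_def by (simp only: e m_def)
  qed
  have gmean: "\<bar>Gw ws - aj\<bar> \<le> Bd" if ws: "ws \<in> set_pmf (steps_pmf ch i)" for ws
  proof -
    have "Gw ws - aj = measure_pmf.expectation (steps_pmf ch i) (\<lambda>ws'. 1 * (Gw ws - Gw ws'))"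
    proof -
      have "measure_pmf.expectation (steps_pmf ch i) (\<lambda>ws'. (-1) * (Gw ws' - Gw ws)) = (-1) * (measure_pmf.expectation (steps_pmf ch i) Gw - Gw ws)"
        by (rule exp_lin[OF fini])
      then show ?thesis unfolding aj_eq by (simp add: algebra_simps)
    qed
    also have "\<bar>\<dots>\<bar> \<le> Bd" by (rule exp_abs_le) (use gdiff ws in simp)
    finally show ?thesis .
  qed
  have "\<bar>measure_pmf.expectation (steps_pmf ch i) (\<lambda>ws. (visind k (cntv ws) - ai) * (Gw ws - aj))\<bar> \<le> Bd"
  proof (rule exp_abs_le)
    fix ws assume ws: "ws \<in> set_pmf (steps_pmf ch i)"
    have "\<bar>visind k (cntv ws) - ai\<bar> \<le> 1" using ai by (auto simp: visind_def)
    moreover have "\<bar>Gw ws - aj\<bar> \<le> Bd" by (rule gmean[OF ws])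
    ultimately have "\<bar>visind k (cntv ws) - ai\<bar> * \<bar>Gw ws - aj\<bar> \<le> 1 * Bd"
      by (intro mult_mono) auto
    then show "\<bar>(visind k (cntv ws) - ai) * (Gw ws - aj)\<bar> \<le> Bd" by (simp add: abs_mult)
  qed
  then show ?thesis using cov_eq unfolding aj_def Bd_def by simp
qed

lemma sum_invsqrt: "(\<Sum>m<n. 1 / sqrt (real m + 1)) \<le> 2 * sqrt (real n)"
proof (induction n)
  case 0 then show ?case by simp
next
  case (Suc n)
  have a: "sqrt (real n) \<le> sqrt (real n + 1)" by simp
  have p: "0 < sqrt (real n + 1)" by simp
  have "1 / sqrt (real n + 1) \<le> 2 * (sqrt (real n + 1) - sqrt (real n))"
  proof -
    have "(sqrt (real n + 1) - sqrt (real n)) * (sqrt (real n + 1) + sqrt (real n)) = 1"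
      by (simp add: algebra_simps)
    moreover have "sqrt (real n + 1) + sqrt (real n) \<le> 2 * sqrt (real n + 1)" using a by simp
    moreover have "0 \<le> sqrt (real n + 1) - sqrt (real n)" using a by simp
    ultimately have "1 \<le> (sqrt (real n + 1) - sqrt (real n)) * (2 * sqrt (real n + 1))"
      using mult_left_mono[of "sqrt (real n + 1) + sqrt (real n)" "2 * sqrt (real n + 1)" "sqrt (real n + 1) - sqrt (real n)"] by linarith
    moreover have "(sqrt (real n + 1) - sqrt (real n)) * (2 * sqrt (real n + 1)) = 2 * (sqrt (real n + 1) - sqrt (real n)) * sqrt (real n + 1)"
      by (simp only: mult.assoc mult.left_commute)
    ultimately have h: "1 \<le> 2 * (sqrt (real n + 1) - sqrt (real n)) * sqrt (real n + 1)" by simp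
    show ?thesis unfolding pos_divide_le_eq[OF p] by (rule h)
  qed
  then show ?case using Suc by (simp add: add.commute)
qed

definition dd :: "nat \<Rightarrow> nat \<Rightarrow> nat" where "dd i j = (if i \<le> j then j - i else i - j)"

lemma half_row:
  fixes g :: "nat \<Rightarrow> nat"
  assumes "inj_on g A" "g ` A \<subseteq> {..<n}" "finite A"
  shows "(\<Sum>j\<in>A. 1 / sqrt (real (g j) + 1)) \<le> 2 * sqrt (real n)"
proof -
  have "(\<Sum>j\<in>A. 1 / sqrt (real (g j) + 1)) = (\<Sum>m\<in>g ` A. 1 / sqrt (real m + 1))"
    using assms by (simp add: sum.reindex)
  also have "\<dots> \<le> (\<Sum>m<n. 1 / sqrt (real m + 1))" using assms by (intro sum_mono2) auto
  also have "\<dots> \<le> 2 * sqrt (real n)" by (rule sum_invsqrt)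
  finally show ?thesis .
qed

lemma row_bound:
  assumes "1 \<le> i" "i \<le> n"
  shows "(\<Sum>j\<in>{1..n}. 1 / sqrt (real (dd i j) + 1)) \<le> 4 * sqrt (real n)"
proof -
  define A1 where "A1 = {j\<in>{1..n}. i \<le> j}"
  define A2 where "A2 = {j\<in>{1..n}. \<not> i \<le> j}"
  have u: "{1..n} = A1 \<union> A2" "A1 \<inter> A2 = {}" "finite A1" "finite A2" unfolding A1_def A2_def by auto
  have "(\<Sum>j\<in>{1..n}. 1 / sqrt (real (dd i j) + 1)) = (\<Sum>j\<in>A1. 1 / sqrt (real (dd i j) + 1)) + (\<Sum>j\<in>A2. 1 / sqrt (real (dd i j) + 1))"
    unfolding u(1) using u(2-4) by (intro sum.union_disjoint) auto
  also have "(\<Sum>j\<in>A1. 1 / sqrt (real (dd i j) + 1)) = (\<Sum>j\<in>A1. 1 / sqrt (real (j - i) + 1))"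
    unfolding A1_def dd_def by (intro sum.cong) auto
  also have "\<dots> \<le> 2 * sqrt (real n)"
  proof (rule half_row)
    show "inj_on (\<lambda>j. j - i) A1" unfolding A1_def by (rule inj_onI) auto
    show "(\<lambda>j. j - i) ` A1 \<subseteq> {..<n}" unfolding A1_def using assms by auto
  qed (rule u)
  also have "(\<Sum>j\<in>A2. 1 / sqrt (real (dd i j) + 1)) = (\<Sum>j\<in>A2. 1 / sqrt (real (i - j) + 1))"
    unfolding A2_def dd_def by (intro sum.cong) auto
  also have "\<dots> \<le> 2 * sqrt (real n)"
  proof (rule half_row)
    show "inj_on (\<lambda>j. i - j) A2" unfolding A2_def by (rule inj_onI) auto
    show "(\<lambda>j. i - j) ` A2 \<subseteq> {..<n}" unfolding A2_def using assms by auto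
  qed (rule u)
  finally show ?thesis by simp
qed

lemma var_expand:
  fixes X :: "nat \<Rightarrow> 'b \<Rightarrow> real" and M :: "'b pmf"
  assumes fin: "finite (set_pmf M)" and I: "finite I"
  shows "measure_pmf.variance M (\<lambda>x. c * (\<Sum>i\<in>I. X i x)) =
     c^2 * (\<Sum>i\<in>I. \<Sum>j\<in>I. measure_pmf.expectation M (\<lambda>x. (X i x - measure_pmf.expectation M (X i)) * (X j x - measure_pmf.expectation M (X j))))"
proof -
  have int: "integrable M f" for f :: "'b \<Rightarrow> real" using fin by (rule integrable_measure_pmf_finite)
  define a where "a i = measure_pmf.expectation M (X i)" for i
  have ES: "measure_pmf.expectation M (\<lambda>x. c * (\<Sum>i\<in>I. X i x)) = c * (\<Sum>i\<in>I. a i)"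
    unfolding a_def by (simp add: int Bochner_Integration.integral_sum)
  have sq: "(c * (\<Sum>i\<in>I. X i x) - c * (\<Sum>i\<in>I. a i))^2 = c^2 * (\<Sum>i\<in>I. \<Sum>j\<in>I. (X i x - a i) * (X j x - a j))" for x
  proof -
    have eq: "c * (\<Sum>i\<in>I. X i x) - c * (\<Sum>i\<in>I. a i) = c * (\<Sum>i\<in>I. X i x - a i)"
      by (simp add: sum_subtractf right_diff_distrib)
    have S2: "(\<Sum>i\<in>I. X i x - a i)^2 = (\<Sum>i\<in>I. \<Sum>j\<in>I. (X i x - a i) * (X j x - a j))"
      by (simp only: power2_eq_square sum_product)
    show ?thesis unfolding eq power_mult_distrib S2 ..
  qed
  have "measure_pmf.variance M (\<lambda>x. c * (\<Sum>i\<in>I. X i x)) =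
      measure_pmf.expectation M (\<lambda>x. c^2 * (\<Sum>i\<in>I. \<Sum>j\<in>I. (X i x - a i) * (X j x - a j)))"
    unfolding ES sq by simp
  also have "\<dots> = c^2 * (\<Sum>i\<in>I. \<Sum>j\<in>I. measure_pmf.expectation M (\<lambda>x. (X i x - a i) * (X j x - a j)))"
    by (simp add: int Bochner_Integration.integral_sum)
  finally show ?thesis unfolding a_def .
qed

theorem proposition3p2:
  fixes q k :: nat and A :: "real list set"
  assumes "q \<ge> 1" and "k \<ge> 2"
    and "finite A" and "card A = q"
    and "\<forall>\<alpha>\<in>A. valid_type k \<alpha>"
  shows "\<forall>\<epsilon>>0. \<exists>C N. \<forall>ch. (\<forall>i\<ge>1. ch i \<in> A) \<longrightarrow>
           (\<forall>n\<ge>N. measure_pmf.variance (steps_pmf ch n) (S_bar k n)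
                     \<le> C * real n powr (-1/2 + \<epsilon>))"
proof (intro allI impI)
  fix \<epsilon> :: real assume \<epsilon>: "\<epsilon> > 0"
  have k: "k \<ge> 2" by (rule assms(2))
  have Ane: "A \<noteq> {}" using assms(1,4) by auto
  define V where "V = (\<lambda>(\<alpha>, j). \<alpha> ! j) ` (A \<times> {..<k})"
  have finV: "finite V" unfolding V_def using assms(3) by simp
  have "0 \<in> {..<k}" using k by simp
  then have "{..<k} \<noteq> {}" by blast
  then have neV: "V \<noteq> {}" unfolding V_def using Ane by auto
  have Vpos: "\<forall>v\<in>V. 0 < v" unfolding V_def using assms(5) valid_typeD by fastforce
  define c0 where "c0 = min (1/2) (Min V)"
  have c0: "0 < c0" "c0 \<le> 1/2" unfolding c0_def using finV neV Vpos by auto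
  have lbA: "c0 \<le> \<alpha> ! j" if "\<alpha> \<in> A" "j < k" for \<alpha> j
  proof -
    have "\<alpha> ! j \<in> V" unfolding V_def using that by force
    then have "Min V \<le> \<alpha> ! j" using finV by simp
    then show ?thesis unfolding c0_def by simp
  qed
  obtain Cw where Cw: "Cw > 0" "\<And>j. j > 0 \<Longrightarrow> 2 ^ card (prime_factors j) \<le> Cw * real j powr \<epsilon>"
    using omega_bound[OF \<epsilon>] by blast
  define K where "K = Cw * (real (k - 1) * 2 / sqrt c0) + 1"
  have K1: "K \<ge> 1" unfolding K_def using Cw c0 by simp
  show "\<exists>C N. \<forall>ch. (\<forall>i\<ge>1. ch i \<in> A) \<longrightarrow>
           (\<forall>n\<ge>N. measure_pmf.variance (steps_pmf ch n) (S_bar k n) \<le> C * real n powr (-1/2 + \<epsilon>))"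
  proof (intro exI[of _ "4 * K"] exI[of _ 1] allI impI)
    fix ch :: "nat \<Rightarrow> real list" and n :: nat
    assume chA: "\<forall>i\<ge>1. ch i \<in> A" and n: "1 \<le> n"
    have vt: "\<forall>t\<ge>1. valid_type k (ch t)" using chA assms(5) by blast
    have lb: "c0 \<le> ch t ! j" if "1 \<le> t" "j < k" for t j using lbA chA that by blast
    define M where "M = steps_pmf ch n"
    have finM: "finite (set_pmf M)" unfolding M_def by (rule finite_set_steps[OF vt])
    define a where "a i = measure_pmf.expectation M (\<lambda>ws. X_ind k ws i)" for i
    define Cov where "Cov i j = measure_pmf.expectation M (\<lambda>ws. (X_ind k ws i - a i) * (X_ind k ws j - a j))" for i j
    have a01: "0 \<le> a i \<and> a i \<le> 1" for i
    proof
      show "0 \<le> a i" unfolding a_def by (rule Bochner_Integration.integral_nonneg) (auto simp: X_ind_def)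
      have "\<bar>a i\<bar> \<le> 1" unfolding a_def by (rule exp_abs_le) (auto simp: X_ind_def)
      then show "a i \<le> 1" by simp
    qed
    have Xa: "\<bar>X_ind k ws i - a i\<bar> \<le> 1" for ws i using a01[of i] by (auto simp: X_ind_def)
    have npow: "1 \<le> real n powr \<epsilon>" using n \<epsilon> by (intro ge_one_powr_ge_zero) auto
    have Kn: "0 \<le> K * real n powr \<epsilon>" using K1 npow by simp
    have cov_lt: "\<bar>Cov i j\<bar> \<le> K * real n powr \<epsilon> / sqrt (real (dd i j) + 1)" if ij: "1 \<le> i" "i < j" "j \<le> n" for i j
    proof -
      have "\<bar>Cov i j\<bar> \<le> 2 ^ card (prime_factors j) * (real (k - 1) * (2 / sqrt ((real (j - i) + 1) * c0)))"
        unfolding Cov_def a_def[of j] M_def by (rule cov_bound[OF k c0 vt lb ij a01[THEN conjunct1] a01[THEN conjunct2]])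
      also have "\<dots> \<le> (Cw * real n powr \<epsilon>) * (real (k - 1) * (2 / sqrt ((real (j - i) + 1) * c0)))"
      proof (rule mult_right_mono)
        have "2 ^ card (prime_factors j) \<le> Cw * real j powr \<epsilon>" using Cw(2)[of j] ij by simp
        also have "\<dots> \<le> Cw * real n powr \<epsilon>" using Cw(1) ij \<epsilon> by (intro mult_left_mono powr_mono2) auto
        finally show "2 ^ card (prime_factors j) \<le> Cw * real n powr \<epsilon>" .
      qed (use c0 in simp)
      also have "\<dots> = Cw * real n powr \<epsilon> * (real (k - 1) * 2 / sqrt c0) / sqrt (real (j - i) + 1)"
        using c0 by (simp add: real_sqrt_mult)
      also have "\<dots> \<le> K * real n powr \<epsilon> / sqrt (real (j - i) + 1)"
      proof (rule divide_right_mono)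
        have "Cw * real n powr \<epsilon> * (real (k - 1) * 2 / sqrt c0) \<le> (Cw * (real (k - 1) * 2 / sqrt c0)) * real n powr \<epsilon>"
          by (simp add: algebra_simps)
        also have "\<dots> \<le> K * real n powr \<epsilon>" unfolding K_def using npow by (intro mult_right_mono) auto
        finally show "Cw * real n powr \<epsilon> * (real (k - 1) * 2 / sqrt c0) \<le> K * real n powr \<epsilon>" .
      qed simp
      also have "real (j - i) = real (dd i j)" using ij by (simp add: dd_def)
      finally show ?thesis .
    qed
    have covb: "\<bar>Cov i j\<bar> \<le> K * real n powr \<epsilon> / sqrt (real (dd i j) + 1)" if "i \<in> {1..n}" "j \<in> {1..n}" for i j
    proof -
      consider "i = j" | "i < j" | "j < i" by linarith
      then show ?thesis
      proof cases
        case 1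
        have "\<bar>Cov i j\<bar> \<le> 1" unfolding Cov_def 1
        proof (rule exp_abs_le)
          fix ws show "\<bar>(X_ind k ws j - a j) * (X_ind k ws j - a j)\<bar> \<le> 1"
          proof -
            have "\<bar>X_ind k ws j - a j\<bar> * \<bar>X_ind k ws j - a j\<bar> \<le> 1 * 1"
              using Xa[of ws j] by (intro mult_mono) auto
            then show ?thesis by (simp only: abs_mult)
          qed
        qed
        also have "1 \<le> K * real n powr \<epsilon>"
        proof -
          have "1 * 1 \<le> K * real n powr \<epsilon>" using K1 npow by (intro mult_mono) auto
          then show ?thesis by simp
        qed
        finally show ?thesis using 1 by (simp add: dd_def)
      next
        case 2 then show ?thesis using that cov_lt by auto
      next
        case 3
        have "Cov i j = Cov j i" unfolding Cov_def by (simp add: mult.commute)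
        moreover have "dd i j = dd j i" using 3 by (simp add: dd_def)
        ultimately show ?thesis using that cov_lt[of j i] 3 by auto
      qed
    qed
    have Sb: "S_bar k n = (\<lambda>ws. (1 / real n) * (\<Sum>i\<in>{1..n}. X_ind k ws i))"
      by (rule ext) (simp add: S_bar_def)
    have "measure_pmf.variance M (S_bar k n) = (1 / real n)^2 * (\<Sum>i\<in>{1..n}. \<Sum>j\<in>{1..n}. Cov i j)"
      unfolding Sb Cov_def a_def by (rule var_expand[OF finM]) simp
    also have "\<dots> \<le> (1 / real n)^2 * (\<Sum>i\<in>{1..n}. \<Sum>j\<in>{1..n}. K * real n powr \<epsilon> / sqrt (real (dd i j) + 1))"
    proof (rule mult_left_mono)
      show "(\<Sum>i\<in>{1..n}. \<Sum>j\<in>{1..n}. Cov i j) \<le> (\<Sum>i\<in>{1..n}. \<Sum>j\<in>{1..n}. K * real n powr \<epsilon> / sqrt (real (dd i j) + 1))"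
        using covb by (intro sum_mono) (meson abs_le_D1)
    qed simp
    also have "(\<Sum>i\<in>{1..n}. \<Sum>j\<in>{1..n}. K * real n powr \<epsilon> / sqrt (real (dd i j) + 1))
        = K * real n powr \<epsilon> * (\<Sum>i\<in>{1..n}. \<Sum>j\<in>{1..n}. 1 / sqrt (real (dd i j) + 1))"
      by (simp add: sum_distrib_left)
    also have "(\<Sum>i\<in>{1..n}. \<Sum>j\<in>{1..n}. 1 / sqrt (real (dd i j) + 1)) \<le> (\<Sum>i\<in>{1..n}. 4 * sqrt (real n))"
      by (intro sum_mono row_bound) auto
    also have "(\<Sum>i\<in>{1..n}. 4 * sqrt (real n)) = real n * (4 * sqrt (real n))" by simp
    finally have v: "measure_pmf.variance M (S_bar k n) \<le> (1 / real n)^2 * (K * real n powr \<epsilon> * (real n * (4 * sqrt (real n))))"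
      using Kn by (simp add: mult_left_mono)
    have np: "0 < real n" using n by simp
    have "(1 / real n)^2 * (K * real n powr \<epsilon> * (real n * (4 * sqrt (real n)))) = 4 * K * (real n powr \<epsilon> * sqrt (real n) / real n)"
      using np by (simp add: power2_eq_square field_simps)
    also have "real n powr \<epsilon> * sqrt (real n) / real n = real n powr (-1/2 + \<epsilon>)"
    proof -
      have e: "-1/2 + \<epsilon> = (\<epsilon> + 1/2) - 1" by simp
      have "real n powr (-1/2 + \<epsilon>) = real n powr ((\<epsilon> + 1/2) - 1)" by (simp only: e)
      also have "\<dots> = real n powr \<epsilon> * real n powr (1/2) / real n powr 1"
        by (simp only: powr_diff powr_add)
      also have "real n powr (1/2) = sqrt (real n)" using np by (simp add: powr_half_sqrt)
      also have "real n powr 1 = real n" using np by simp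
      finally show ?thesis by simp
    qed
    finally have eqf: "(1 / real n)^2 * (K * real n powr \<epsilon> * (real n * (4 * sqrt (real n)))) = 4 * K * real n powr (-1/2 + \<epsilon>)" .
    show "measure_pmf.variance (steps_pmf ch n) (S_bar k n) \<le> 4 * K * real n powr (-1/2 + \<epsilon>)"
      using v eqf unfolding M_def by (rule ord_le_eq_trans)
  qed
qed

end
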